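(* Let $G$ be a finite transitive permutation group whose point stabilizers have order $2$. Then $G$ has the EKR property if and only if $$\sum_{\chi}\frac{\chi(g)^3}{\chi(1)}=0,$$ where $\chi$ runs through the set of all complex irreducible characters of $G$ and $g$ is any non-identity element of $G$ fixing a point.
   Context: For a permutation group $G$ on a finite set $V$, a subset $\mathcal{F}\subseteq G$ is intersecting if for all $g,h\in\mathcal{F}$ there is $v\in V$ with $g(v)=h(v)$. $G$ has the Erdős–Ko–Rado (EKR) property if the maximum size of an intersecting set of $G$ equals the maximum order of a point stabilizer $G_v$, $v\in V$. *)

theory Defs
  imports "HOL-Algebra.Bij" "Jordan_Normal_Form.Matrix"
begin

text \<open>A permutation group on a finite set V is a subgroup G of BijGroup V
  (bijections of V, extensional outside V, composition as product).\<close>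

definition perm_group :: "'a set \<Rightarrow> ('a \<Rightarrow> 'a) set \<Rightarrow> bool" where
  "perm_group V G \<longleftrightarrow> finite V \<and> subgroup G (BijGroup V)"

definition stabilizer :: "'a set \<Rightarrow> ('a \<Rightarrow> 'a) set \<Rightarrow> 'a \<Rightarrow> ('a \<Rightarrow> 'a) set" where
  "stabilizer V G v = {g \<in> G. g v = v}"

definition transitive_on :: "'a set \<Rightarrow> ('a \<Rightarrow> 'a) set \<Rightarrow> bool" where
  "transitive_on V G \<longleftrightarrow> (\<forall>u\<in>V. \<forall>w\<in>V. \<exists>g\<in>G. g u = w)"

definition intersecting :: "'a set \<Rightarrow> ('a \<Rightarrow> 'a) set \<Rightarrow> bool" where
  "intersecting V F \<longleftrightarrow> (\<forall>g\<in>F. \<forall>h\<in>F. \<exists>v\<in>V. g v = h v)"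

definition EKR :: "'a set \<Rightarrow> ('a \<Rightarrow> 'a) set \<Rightarrow> bool" where
  "EKR V G \<longleftrightarrow>
     Max {card F | F. F \<subseteq> G \<and> intersecting V F} = Max ((\<lambda>v. card (stabilizer V G v)) ` V)"

definition representation :: "('g, 'b) monoid_scheme \<Rightarrow> nat \<Rightarrow> ('g \<Rightarrow> complex mat) \<Rightarrow> bool" where
  "representation H n \<rho> \<longleftrightarrow>
     (\<forall>g\<in>carrier H. \<rho> g \<in> carrier_mat n n) \<and>
     \<rho> \<one>\<^bsub>H\<^esub> = 1\<^sub>m n \<and>
     (\<forall>g\<in>carrier H. \<forall>h\<in>carrier H. \<rho> (g \<otimes>\<^bsub>H\<^esub> h) = \<rho> g * \<rho> h)"

definition subspace_vec :: "nat \<Rightarrow> complex vec set \<Rightarrow> bool" where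
  "subspace_vec n W \<longleftrightarrow> W \<subseteq> carrier_vec n \<and> 0\<^sub>v n \<in> W \<and>
     (\<forall>x\<in>W. \<forall>y\<in>W. x + y \<in> W) \<and> (\<forall>c. \<forall>x\<in>W. c \<cdot>\<^sub>v x \<in> W)"

definition irreducible_rep :: "('g, 'b) monoid_scheme \<Rightarrow> nat \<Rightarrow> ('g \<Rightarrow> complex mat) \<Rightarrow> bool" where
  "irreducible_rep H n \<rho> \<longleftrightarrow> representation H n \<rho> \<and> n > 0 \<and>
     \<not> (\<exists>W. subspace_vec n W \<and> W \<noteq> {0\<^sub>v n} \<and> W \<noteq> carrier_vec n \<and>
            (\<forall>g\<in>carrier H. \<forall>w\<in>W. \<rho> g *\<^sub>v w \<in> W))"

definition mat_trace :: "complex mat \<Rightarrow> complex" where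
  "mat_trace A = (\<Sum>i<dim_row A. A $$ (i, i))"

definition irr_chars :: "('g, 'b) monoid_scheme \<Rightarrow> ('g \<Rightarrow> complex) set" where
  "irr_chars H = {\<chi>. \<exists>n \<rho>. irreducible_rep H n \<rho> \<and> \<chi> = (\<lambda>g\<in>carrier H. mat_trace (\<rho> g))}"

end

theory Submission
  imports Defs "Jordan_Normal_Form.Schur_Decomposition" "Jordan_Normal_Form.Spectral_Radius"
begin

lemma mat_entry_vec: "(A :: complex mat) \<in> carrier_mat n m \<Longrightarrow> i < n \<Longrightarrow> j < m \<Longrightarrow> A $$ (i,j) = (A *\<^sub>v unit_vec m j) $ i"
  by (subst index_mult_mat_vec) (auto simp: scalar_prod_right_unit)

lemma mat_eq_by_vec:
  fixes A B :: "complex mat"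
  assumes "A \<in> carrier_mat n m" "B \<in> carrier_mat n m"
    and "\<And>x. x \<in> carrier_vec m \<Longrightarrow> A *\<^sub>v x = B *\<^sub>v x"
  shows "A = B"
proof (rule eq_matI)
  fix i j assume "i < dim_row B" "j < dim_col B"
  then show "A $$ (i,j) = B $$ (i,j)" using assms mat_entry_vec[of A n m i j] mat_entry_vec[of B n m i j]
    by (metis carrier_matD unit_vec_carrier)
qed (use assms in auto)

lemma mat_trace_sq: "A \<in> carrier_mat n n \<Longrightarrow> mat_trace A = (\<Sum>i<n. A $$ (i,i))"
  unfolding mat_trace_def by auto

lemma mat_trace_comm:
  assumes A: "A \<in> carrier_mat n m" and B: "B \<in> carrier_mat m n"
  shows "mat_trace (A * B) = mat_trace (B * A)"
proof -
  have "mat_trace (A * B) = (\<Sum>i<n. \<Sum>j<m. A $$ (i,j) * B $$ (j,i))"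
    using A B unfolding mat_trace_def
    by (auto simp: scalar_prod_def atLeast0LessThan intro!: sum.cong)
  also have "\<dots> = (\<Sum>j<m. \<Sum>i<n. B $$ (j,i) * A $$ (i,j))"
    by (subst sum.swap) (simp add: mult.commute)
  also have "\<dots> = mat_trace (B * A)"
    using A B unfolding mat_trace_def
    by (auto simp: scalar_prod_def atLeast0LessThan intro!: sum.cong)
  finally show ?thesis .
qed

lemma mat_trace_one[simp]: "mat_trace (1\<^sub>m n) = of_nat n"
  unfolding mat_trace_def by simp

lemma mat_trace_smult: "A \<in> carrier_mat n n \<Longrightarrow> mat_trace (c \<cdot>\<^sub>m A) = c * mat_trace A"
  unfolding mat_trace_def by (auto simp: sum_distrib_left)

lemma mult_entry: "A \<in> carrier_mat n m \<Longrightarrow> B \<in> carrier_mat m k \<Longrightarrow> i < n \<Longrightarrow> j < k \<Longrightarrow>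
  (A * B) $$ (i,j) = (\<Sum>l<m. A $$ (i,l) * B $$ (l,j))"
  by (auto simp: scalar_prod_def atLeast0LessThan intro!: sum.cong)

section \<open>Finite sums of matrices\<close>

definition msum :: "('x \<Rightarrow> complex mat) \<Rightarrow> 'x set \<Rightarrow> nat \<Rightarrow> nat \<Rightarrow> complex mat" where
  "msum F S n m = mat n m (\<lambda>(i,j). \<Sum>x\<in>S. F x $$ (i,j))"

lemma msum_carrier[simp]: "msum F S n m \<in> carrier_mat n m"
  unfolding msum_def by auto

lemma msum_dims[simp]: "dim_row (msum F S n m) = n" "dim_col (msum F S n m) = m"
  unfolding msum_def by auto

lemma msum_index: "i < n \<Longrightarrow> j < m \<Longrightarrow> msum F S n m $$ (i,j) = (\<Sum>x\<in>S. F x $$ (i,j))"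
  unfolding msum_def by auto

lemma msum_cong: "(\<And>x. x \<in> S \<Longrightarrow> F x = G x) \<Longrightarrow> msum F S n m = msum G S n m"
  unfolding msum_def by auto

lemma msum_reindex:
  assumes "bij_betw \<phi> S T"
  shows "msum F T n m = msum (\<lambda>x. F (\<phi> x)) S n m"
proof -
  have *: "\<And>g. sum g T = (\<Sum>x\<in>S. g (\<phi> x))" using sum.reindex_bij_betw[OF assms] by metis
  show ?thesis unfolding msum_def by (intro eq_matI) (auto simp: *)
qed

lemma mult_msum_left:
  assumes A: "A \<in> carrier_mat n m" and F: "\<And>x. x \<in> S \<Longrightarrow> F x \<in> carrier_mat m k"
  shows "A * msum F S m k = msum (\<lambda>x. A * F x) S n k"
proof (rule eq_matI)
  fix i j assume ij: "i < dim_row (msum (\<lambda>x. A * F x) S n k)" "j < dim_col (msum (\<lambda>x. A * F x) S n k)"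
  then have i: "i < n" and j: "j < k" by auto
  have "(A * msum F S m k) $$ (i,j) = (\<Sum>l<m. A $$ (i,l) * (\<Sum>x\<in>S. F x $$ (l,j)))"
    using A i j by (auto simp: scalar_prod_def msum_index atLeast0LessThan intro!: sum.cong)
  also have "\<dots> = (\<Sum>x\<in>S. \<Sum>l<m. A $$ (i,l) * F x $$ (l,j))"
    by (simp add: sum_distrib_left sum.swap[of _ S])
  also have "\<dots> = msum (\<lambda>x. A * F x) S n k $$ (i,j)"
    using A F i j by (auto simp: mult_entry[OF A F] msum_index intro!: sum.cong)
  finally show "(A * msum F S m k) $$ (i,j) = msum (\<lambda>x. A * F x) S n k $$ (i,j)" .
qed (use A in auto)

lemma mult_msum_right:
  assumes B: "B \<in> carrier_mat m k" and F: "\<And>x. x \<in> S \<Longrightarrow> F x \<in> carrier_mat n m"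
  shows "msum F S n m * B = msum (\<lambda>x. F x * B) S n k"
proof (rule eq_matI)
  fix i j assume ij: "i < dim_row (msum (\<lambda>x. F x * B) S n k)" "j < dim_col (msum (\<lambda>x. F x * B) S n k)"
  then have i: "i < n" and j: "j < k" by auto
  have "(msum F S n m * B) $$ (i,j) = (\<Sum>l<m. (\<Sum>x\<in>S. F x $$ (i,l)) * B $$ (l,j))"
    using B i j by (auto simp: scalar_prod_def msum_index atLeast0LessThan intro!: sum.cong)
  also have "\<dots> = (\<Sum>x\<in>S. \<Sum>l<m. F x $$ (i,l) * B $$ (l,j))"
    by (simp add: sum_distrib_right sum.swap[of _ S])
  also have "\<dots> = msum (\<lambda>x. F x * B) S n k $$ (i,j)"
    using B F i j by (auto simp: mult_entry[OF F B] msum_index intro!: sum.cong)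
  finally show "(msum F S n m * B) $$ (i,j) = msum (\<lambda>x. F x * B) S n k $$ (i,j)" .
qed (use B in auto)

lemma msum_trace:
  assumes "\<And>x. x \<in> S \<Longrightarrow> F x \<in> carrier_mat n n"
  shows "mat_trace (msum F S n n) = (\<Sum>x\<in>S. mat_trace (F x))"
proof -
  have "mat_trace (msum F S n n) = (\<Sum>i<n. \<Sum>x\<in>S. F x $$ (i, i))"
    unfolding mat_trace_def by (auto simp: msum_index)
  also have "\<dots> = (\<Sum>x\<in>S. \<Sum>i<n. F x $$ (i, i))" by (rule sum.swap)
  also have "\<dots> = (\<Sum>x\<in>S. mat_trace (F x))" using assms by (auto simp: mat_trace_def intro!: sum.cong)
  finally show ?thesis .
qed

section \<open>Injective matrices and bases of subspaces\<close>

definition inj_mat :: "complex mat \<Rightarrow> bool" where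
  "inj_mat C \<longleftrightarrow> (\<forall>x\<in>carrier_vec (dim_col C). C *\<^sub>v x = 0\<^sub>v (dim_row C) \<longrightarrow> x = 0\<^sub>v (dim_col C))"

lemma inj_matD: "inj_mat C \<Longrightarrow> C \<in> carrier_mat n m \<Longrightarrow> x \<in> carrier_vec m \<Longrightarrow> C *\<^sub>v x = 0\<^sub>v n \<Longrightarrow> x = 0\<^sub>v m"
  unfolding inj_mat_def by auto

lemma inj_matI: "C \<in> carrier_mat n m \<Longrightarrow> (\<And>x. x \<in> carrier_vec m \<Longrightarrow> C *\<^sub>v x = 0\<^sub>v n \<Longrightarrow> x = 0\<^sub>v m) \<Longrightarrow> inj_mat C"
  unfolding inj_mat_def by auto

lemma inj_mat_cancel:
  assumes C: "C \<in> carrier_mat n m" and inj: "inj_mat C" and x: "x \<in> carrier_vec m" and y: "y \<in> carrier_vec m"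
    and eq: "C *\<^sub>v x = C *\<^sub>v y"
  shows "x = y"
proof -
  have "C *\<^sub>v (x - y) = 0\<^sub>v n" using C x y eq by (simp add: mult_minus_distrib_mat_vec)
  then have "x - y = 0\<^sub>v m" using inj_matD[OF inj C] x y by auto
  then have "\<forall>i<m. (x - y) $ i = 0" by auto
  then show ?thesis using x y by (intro eq_vecI) auto
qed

lemma inj_mat_cancel_mat:
  assumes C: "C \<in> carrier_mat n m" and inj: "inj_mat C" and X: "X \<in> carrier_mat m k" and Y: "Y \<in> carrier_mat m k"
    and eq: "C * X = C * Y"
  shows "X = Y"
proof (rule mat_eq_by_vec[OF X Y])
  fix x :: "complex vec" assume x: "x \<in> carrier_vec k"
  have "C *\<^sub>v (X *\<^sub>v x) = C *\<^sub>v (Y *\<^sub>v x)"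
    using C X Y x eq by (metis assoc_mult_mat_vec)
  then show "X *\<^sub>v x = Y *\<^sub>v x" using inj_mat_cancel[OF C inj] X Y x by auto
qed

lemma inj_mat_le:
  assumes C: "C \<in> carrier_mat m k" and inj: "inj_mat C"
  shows "k \<le> m"
proof (rule ccontr)
  assume "\<not> k \<le> m"
  then have km: "m < k" by auto
  define D where "D = mat k k (\<lambda>(i,j). if i < m then C $$ (i,j) else 0)"
  have D: "D \<in> carrier_mat k k" unfolding D_def by auto
  have "D = mat\<^sub>r k k (\<lambda>i. if i = m then 0\<^sub>v k else row D i)"
    by (rule eq_matI) (auto simp: D_def mat_of_rows_def)
  then have "det D = 0" using det_row_0[OF km, of "\<lambda>i. row D i"] D by auto
  then obtain v where v: "v \<in> carrier_vec k" "v \<noteq> 0\<^sub>v k" "D *\<^sub>v v = 0\<^sub>v k"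
    using det_0_iff_vec_prod_zero[OF D] by auto
  have "C *\<^sub>v v = 0\<^sub>v m"
  proof (rule eq_vecI)
    fix i assume "i < dim_vec (0\<^sub>v m :: complex vec)"
    then have i: "i < m" by auto
    have "(C *\<^sub>v v) $ i = row C i \<bullet> v" using C i by auto
    also have "row C i = row D i" using C i km by (auto simp: D_def)
    also have "row D i \<bullet> v = (D *\<^sub>v v) $ i" using D i km by auto
    finally show "(C *\<^sub>v v) $ i = 0\<^sub>v m $ i" using v i km by auto
  qed (use C in auto)
  then have "v = 0\<^sub>v k" using inj_matD[OF inj C v(1)] by auto
  with v show False by auto
qed

lemma inj_square_inverse:
  assumes C: "C \<in> carrier_mat m m" and inj: "inj_mat C"
  shows "\<exists>D \<in> carrier_mat m m. C * D = 1\<^sub>m m \<and> D * C = 1\<^sub>m m"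
proof -
  have "det C \<noteq> 0" using det_0_iff_vec_prod_zero[OF C] inj_matD[OF inj C] by auto
  from det_non_zero_imp_unit[OF C this, of "()"]
  show ?thesis unfolding Units_def ring_mat_def by auto
qed

lemma inj_square_surj:
  assumes C: "C \<in> carrier_mat m m" and inj: "inj_mat C"
  shows "(\<lambda>x. C *\<^sub>v x) ` carrier_vec m = carrier_vec m"
proof
  show "(\<lambda>x. C *\<^sub>v x) ` carrier_vec m \<subseteq> carrier_vec m" using C by auto
  show "carrier_vec m \<subseteq> (\<lambda>x. C *\<^sub>v x) ` carrier_vec m"
  proof
    fix y :: "complex vec" assume y: "y \<in> carrier_vec m"
    obtain D where D: "D \<in> carrier_mat m m" "C * D = 1\<^sub>m m" using inj_square_inverse[OF C inj] by auto
    have "C *\<^sub>v (D *\<^sub>v y) = y" using C D y by (metis assoc_mult_mat_vec one_mult_mat_vec)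
    then show "y \<in> (\<lambda>x. C *\<^sub>v x) ` carrier_vec m" using D y by (metis image_eqI mult_mat_vec_carrier)
  qed
qed


lemma subspace_vecD:
  assumes "subspace_vec n W"
  shows "W \<subseteq> carrier_vec n" "0\<^sub>v n \<in> W" "\<And>x y. x \<in> W \<Longrightarrow> y \<in> W \<Longrightarrow> x + y \<in> W"
    "\<And>c x. x \<in> W \<Longrightarrow> c \<cdot>\<^sub>v x \<in> W"
  using assms unfolding subspace_vec_def by auto

lemma mult_mat_vec_dim0: "C \<in> carrier_mat m 0 \<Longrightarrow> x \<in> carrier_vec 0 \<Longrightarrow> C *\<^sub>v x = (0\<^sub>v m :: complex vec)"
  by (intro eq_vecI) (auto simp: scalar_prod_def)

lemma image_dim0: "C \<in> carrier_mat m 0 \<Longrightarrow> (\<lambda>x. C *\<^sub>v x) ` carrier_vec 0 = {0\<^sub>v m :: complex vec}"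
  using mult_mat_vec_dim0[of C m] by (auto simp: vec_of_dim_0 intro!: image_eqI[of _ _ "0\<^sub>v 0"])

lemma basis_extend:
  assumes W: "subspace_vec m W"
  shows "C \<in> carrier_mat m k \<Longrightarrow> inj_mat C \<Longrightarrow> (\<forall>x\<in>carrier_vec k. C *\<^sub>v x \<in> W) \<Longrightarrow>
    \<exists>k' C'. C' \<in> carrier_mat m k' \<and> inj_mat C' \<and> (\<lambda>x. C' *\<^sub>v x) ` carrier_vec k' = W"
proof (induction "m - k" arbitrary: k C rule: less_induct)
  case less
  note C = less.prems(1) and inj = less.prems(2) and CW = less.prems(3)
  show ?case
  proof (cases "W \<subseteq> (\<lambda>x. C *\<^sub>v x) ` carrier_vec k")
    case True
    then have "(\<lambda>x. C *\<^sub>v x) ` carrier_vec k = W" using CW by auto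
    then show ?thesis using C inj by blast
  next
    case False
    then obtain w where wW: "w \<in> W" and wn: "w \<notin> (\<lambda>x. C *\<^sub>v x) ` carrier_vec k" by auto
    have w: "w \<in> carrier_vec m" using wW subspace_vecD(1)[OF W] by auto
    define C' where "C' = mat m (Suc k) (\<lambda>(i,j). if j < k then C $$ (i,j) else w $ i)"
    have C': "C' \<in> carrier_mat m (Suc k)" unfolding C'_def by auto
    have key: "C' *\<^sub>v x = C *\<^sub>v (vec k (\<lambda>i. x $ i)) + x $ k \<cdot>\<^sub>v w" if x: "x \<in> carrier_vec (Suc k)" for x
    proof (rule eq_vecI)
      fix i assume "i < dim_vec (C *\<^sub>v vec k (\<lambda>i. x $ i) + x $ k \<cdot>\<^sub>v w)"
      then have i: "i < m" using C w by auto
      have "(C' *\<^sub>v x) $ i = (\<Sum>j<Suc k. C' $$ (i,j) * x $ j)"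
        using C' x i by (auto simp: scalar_prod_def atLeast0LessThan mult.commute intro!: sum.cong)
      also have "\<dots> = (\<Sum>j<k. C $$ (i,j) * x $ j) + w $ i * x $ k"
        using i by (simp add: C'_def)
      also have "(\<Sum>j<k. C $$ (i,j) * x $ j) = (C *\<^sub>v (vec k (\<lambda>i. x $ i))) $ i"
        using C i by (auto simp: scalar_prod_def atLeast0LessThan intro!: sum.cong)
      finally show "(C' *\<^sub>v x) $ i = (C *\<^sub>v vec k (\<lambda>i. x $ i) + x $ k \<cdot>\<^sub>v w) $ i"
        using C w i by (auto simp: mult.commute)
    qed (use C C' w in auto)
    have inj': "inj_mat C'"
    proof (rule inj_matI[OF C'])
      fix x :: "complex vec" assume x: "x \<in> carrier_vec (Suc k)" and 0: "C' *\<^sub>v x = 0\<^sub>v m"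
      let ?x = "vec k (\<lambda>i. x $ i)"
      have sum0: "C *\<^sub>v ?x + x $ k \<cdot>\<^sub>v w = 0\<^sub>v m" using key[OF x] 0 by simp
      have xk: "x $ k = 0"
      proof (rule ccontr)
        assume nz: "x $ k \<noteq> 0"
        have "w = C *\<^sub>v ((- 1 / x $ k) \<cdot>\<^sub>v ?x)"
        proof (rule eq_vecI)
          fix i assume "i < dim_vec (C *\<^sub>v ((- 1 / x $ k) \<cdot>\<^sub>v ?x))"
          then have i: "i < m" using C by auto
          have e1: "(C *\<^sub>v ?x) $ i + x $ k * w $ i = 0"
            using arg_cong[OF sum0, of "\<lambda>v. v $ i"] i C w by auto
          have e2: "(C *\<^sub>v ((- 1 / x $ k) \<cdot>\<^sub>v ?x)) $ i = (- 1 / x $ k) * (C *\<^sub>v ?x) $ i"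
            using mult_mat_vec[OF C, of ?x "- 1 / x $ k"] i C by auto
          have gen: "\<And>a b c :: complex. c \<noteq> 0 \<Longrightarrow> b + c * a = 0 \<Longrightarrow> a = (- 1 / c) * b"
            by (simp add: field_simps) (metis add.commute eq_neg_iff_add_eq_0)
          show "w $ i = (C *\<^sub>v ((- 1 / x $ k) \<cdot>\<^sub>v ?x)) $ i"
            unfolding e2 by (rule gen[OF nz e1])
        qed (use C w in auto)
        then show False using wn by auto
      qed
      have "C *\<^sub>v ?x + 0 \<cdot>\<^sub>v w = C *\<^sub>v ?x" using C w by (intro eq_vecI) auto
      then have "C *\<^sub>v ?x = 0\<^sub>v m" using sum0 xk by auto
      then have "?x = 0\<^sub>v k" using inj_matD[OF inj C] by auto
      then have "\<forall>i<k. x $ i = 0" by (metis index_vec index_zero_vec(1))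
      then show "x = 0\<^sub>v (Suc k)" using xk x by (intro eq_vecI) (auto simp: less_Suc_eq)
    qed
    have C'W: "\<forall>x\<in>carrier_vec (Suc k). C' *\<^sub>v x \<in> W"
    proof
      fix x :: "complex vec" assume x: "x \<in> carrier_vec (Suc k)"
      have "C *\<^sub>v (vec k (\<lambda>i. x $ i)) \<in> W" using CW by auto
      moreover have "x $ k \<cdot>\<^sub>v w \<in> W" using wW subspace_vecD(4)[OF W] by auto
      ultimately show "C' *\<^sub>v x \<in> W" using key[OF x] subspace_vecD(3)[OF W] by auto
    qed
    have "Suc k \<le> m" using inj_mat_le[OF C' inj'] .
    then have "m - Suc k < m - k" by auto
    from less.hyps[OF this C' inj' C'W] show ?thesis .
  qed
qed

lemma subspace_basis:
  assumes W: "subspace_vec m W"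
  shows "\<exists>k C. C \<in> carrier_mat m k \<and> inj_mat C \<and> (\<lambda>x. C *\<^sub>v x) ` carrier_vec k = W"
proof -
  have C0: "(0\<^sub>m m 0 :: complex mat) \<in> carrier_mat m 0" by auto
  have inj0: "inj_mat (0\<^sub>m m 0 :: complex mat)"
    by (rule inj_matI[OF C0]) (auto simp: vec_of_dim_0)
  have "\<forall>x\<in>carrier_vec 0. (0\<^sub>m m 0 :: complex mat) *\<^sub>v x \<in> W"
    using subspace_vecD(2)[OF W] mult_mat_vec_dim0[OF C0] by auto
  from basis_extend[OF W C0 inj0 this] show ?thesis .
qed

lemma subspace_basis_proper:
  assumes W: "subspace_vec m W" and nz: "W \<noteq> {0\<^sub>v m}" and np: "W \<noteq> carrier_vec m"
  shows "\<exists>k C. 0 < k \<and> k < m \<and> C \<in> carrier_mat m k \<and> inj_mat C \<and> (\<lambda>x. C *\<^sub>v x) ` carrier_vec k = W"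
proof -
  obtain k C where C: "C \<in> carrier_mat m k" and inj: "inj_mat C" and im: "(\<lambda>x. C *\<^sub>v x) ` carrier_vec k = W"
    using subspace_basis[OF W] by auto
  have "k \<le> m" using inj_mat_le[OF C inj] .
  moreover have "k \<noteq> m" using inj_square_surj[of C m] C inj im np by auto
  moreover have "k \<noteq> 0"
  proof
    assume "k = 0"
    then have "W = {0\<^sub>v m}" using im C image_dim0[of C m] by auto
    with nz show False by auto
  qed
  ultimately show ?thesis using C inj im by auto
qed

lemma subspace_basis_nz:
  assumes W: "subspace_vec m W" and nz: "W \<noteq> {0\<^sub>v m}"
  shows "\<exists>k C. 0 < k \<and> C \<in> carrier_mat m k \<and> inj_mat C \<and> (\<lambda>x. C *\<^sub>v x) ` carrier_vec k = W"
proof -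
  obtain k C where C: "C \<in> carrier_mat m k" and inj: "inj_mat C" and im: "(\<lambda>x. C *\<^sub>v x) ` carrier_vec k = W"
    using subspace_basis[OF W] by auto
  moreover have "k \<noteq> 0"
  proof
    assume "k = 0"
    then have "W = {0\<^sub>v m}" using im C image_dim0[of C m] by auto
    with nz show False by auto
  qed
  ultimately show ?thesis by auto
qed


lemma mult_zero_vec_c[simp]: "(A :: complex mat) \<in> carrier_mat n m \<Longrightarrow> A *\<^sub>v 0\<^sub>v m = 0\<^sub>v n"
  by (intro eq_vecI) (auto simp: scalar_prod_def)

lemma smult_one_mult_vec: "(x :: complex vec) \<in> carrier_vec n \<Longrightarrow> (c \<cdot>\<^sub>m 1\<^sub>m n) *\<^sub>v x = c \<cdot>\<^sub>v x"
proof (intro eq_vecI)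
  fix i assume "x \<in> carrier_vec n" "i < dim_vec (c \<cdot>\<^sub>v x)"
  then show "((c \<cdot>\<^sub>m 1\<^sub>m n) *\<^sub>v x) $ i = (c \<cdot>\<^sub>v x) $ i"
    using scalar_prod_left_unit[of x n i]
    by (auto simp: smult_scalar_prod_distrib[of _ n x n] )
qed auto

locale fgroup = group G for G (structure) +
  assumes fin: "finite (carrier G)"
begin

lemma rep_carrier: "representation G n \<rho> \<Longrightarrow> h \<in> carrier G \<Longrightarrow> \<rho> h \<in> carrier_mat n n"
  unfolding representation_def by auto

lemma rep_one: "representation G n \<rho> \<Longrightarrow> \<rho> \<one> = 1\<^sub>m n"
  unfolding representation_def by auto

lemma rep_mult: "representation G n \<rho> \<Longrightarrow> h \<in> carrier G \<Longrightarrow> k \<in> carrier G \<Longrightarrow> \<rho> (h \<otimes> k) = \<rho> h * \<rho> k"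
  unfolding representation_def by auto

lemma rep_inv_l: "representation G n \<rho> \<Longrightarrow> h \<in> carrier G \<Longrightarrow> \<rho> (inv h) * \<rho> h = 1\<^sub>m n"
  using rep_mult[of n \<rho> "inv h" h] rep_one[of n \<rho>] by auto

lemma rep_inv_r: "representation G n \<rho> \<Longrightarrow> h \<in> carrier G \<Longrightarrow> \<rho> h * \<rho> (inv h) = 1\<^sub>m n"
  using rep_mult[of n \<rho> h "inv h"] rep_one[of n \<rho>] by auto

lemma irr_rep: "irreducible_rep G n \<rho> \<Longrightarrow> representation G n \<rho>"
  unfolding irreducible_rep_def by auto

lemma irr_pos: "irreducible_rep G n \<rho> \<Longrightarrow> 0 < n"
  unfolding irreducible_rep_def by auto

lemma irr_noinv:
  assumes "irreducible_rep G n \<rho>" "subspace_vec n W" "\<forall>h\<in>carrier G. \<forall>w\<in>W. \<rho> h *\<^sub>v w \<in> W"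
    "W \<noteq> {0\<^sub>v n}"
  shows "W = carrier_vec n"
  using assms unfolding irreducible_rep_def by blast

lemma schur_scalar:
  assumes irr: "irreducible_rep G n \<rho>" and A: "A \<in> carrier_mat n n"
    and comm: "\<forall>h\<in>carrier G. \<rho> h * A = A * \<rho> h"
  shows "\<exists>c. A = c \<cdot>\<^sub>m 1\<^sub>m n"
proof -
  have rep: "representation G n \<rho>" and n: "0 < n" using irr irr_rep irr_pos by auto
  obtain c where "eigenvalue A c" using spectrum_non_empty[OF A n] unfolding spectrum_def by auto
  then obtain v where v: "v \<in> carrier_vec n" "v \<noteq> 0\<^sub>v n" "A *\<^sub>v v = c \<cdot>\<^sub>v v"
    unfolding eigenvalue_def eigenvector_def using A by auto
  define W where "W = {w \<in> carrier_vec n. A *\<^sub>v w = c \<cdot>\<^sub>v w}"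
  have sub: "subspace_vec n W"
    unfolding subspace_vec_def
  proof (intro conjI ballI allI)
    show "W \<subseteq> carrier_vec n" unfolding W_def by auto
    show "0\<^sub>v n \<in> W" unfolding W_def using A by auto
    fix x y assume x: "x \<in> W" and y: "y \<in> W"
    then show "x + y \<in> W" unfolding W_def using A
      by (auto simp: mult_add_distrib_mat_vec smult_add_distrib_vec)
  next
    fix d :: complex and x assume x: "x \<in> W"
    then show "d \<cdot>\<^sub>v x \<in> W" unfolding W_def using A
      by (auto simp: mult_mat_vec smult_smult_assoc mult.commute)
  qed
  have inv: "\<forall>h\<in>carrier G. \<forall>w\<in>W. \<rho> h *\<^sub>v w \<in> W"
  proof (intro ballI)
    fix h w assume h: "h \<in> carrier G" and w: "w \<in> W"
    have rh: "\<rho> h \<in> carrier_mat n n" using rep_carrier[OF rep h] .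
    have wc: "w \<in> carrier_vec n" and Aw: "A *\<^sub>v w = c \<cdot>\<^sub>v w" using w unfolding W_def by auto
    have "A *\<^sub>v (\<rho> h *\<^sub>v w) = (A * \<rho> h) *\<^sub>v w" using A rh wc by auto
    also have "\<dots> = (\<rho> h * A) *\<^sub>v w" using comm h by auto
    also have "\<dots> = \<rho> h *\<^sub>v (c \<cdot>\<^sub>v w)" using A rh wc Aw by auto
    also have "\<dots> = c \<cdot>\<^sub>v (\<rho> h *\<^sub>v w)" using rh wc by (rule mult_mat_vec)
    finally show "\<rho> h *\<^sub>v w \<in> W" unfolding W_def using rh wc by auto
  qed
  have "W \<noteq> {0\<^sub>v n}" using v unfolding W_def by auto
  then have Wall: "W = carrier_vec n" using irr_noinv[OF irr sub inv] by auto
  have "A = c \<cdot>\<^sub>m 1\<^sub>m n"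
  proof (rule mat_eq_by_vec[OF A])
    fix x :: "complex vec" assume x: "x \<in> carrier_vec n"
    then have "x \<in> W" using Wall by auto
    then show "A *\<^sub>v x = (c \<cdot>\<^sub>m 1\<^sub>m n) *\<^sub>v x" unfolding W_def using smult_one_mult_vec[OF x] by auto
  qed auto
  then show ?thesis by auto
qed

end

lemma zero_mat_mult_vec_c: "x \<in> carrier_vec m \<Longrightarrow> (0\<^sub>m n m :: complex mat) *\<^sub>v x = 0\<^sub>v n"
  by (intro eq_vecI) (auto simp: scalar_prod_def)

context fgroup
begin

lemma intertwine_trace:
  assumes irrr: "irreducible_rep G n \<rho>" and irrs: "irreducible_rep G m \<sigma>" and T: "T \<in> carrier_mat n m"
    and comm: "\<forall>h\<in>carrier G. \<rho> h * T = T * \<sigma> h" and nz: "T \<noteq> 0\<^sub>m n m"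
  shows "\<forall>h\<in>carrier G. mat_trace (\<sigma> h) = mat_trace (\<rho> h)"
proof -
  have repr: "representation G n \<rho>" and reps: "representation G m \<sigma>" using irrr irrs irr_rep by auto
  define K where "K = {x \<in> carrier_vec m. T *\<^sub>v x = 0\<^sub>v n}"
  have Ksub: "subspace_vec m K"
    unfolding subspace_vec_def
  proof (intro conjI ballI allI)
    show "K \<subseteq> carrier_vec m" unfolding K_def by auto
    show "0\<^sub>v m \<in> K" unfolding K_def using T by auto
    fix x y assume "x \<in> K" "y \<in> K"
    then show "x + y \<in> K" unfolding K_def using T by (auto simp: mult_add_distrib_mat_vec)
  next
    fix d :: complex and x assume "x \<in> K"
    then show "d \<cdot>\<^sub>v x \<in> K" unfolding K_def using T by (auto simp: mult_mat_vec)
  qed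
  have Kinv: "\<forall>h\<in>carrier G. \<forall>w\<in>K. \<sigma> h *\<^sub>v w \<in> K"
  proof (intro ballI)
    fix h w assume h: "h \<in> carrier G" and w: "w \<in> K"
    have sh: "\<sigma> h \<in> carrier_mat m m" and rh: "\<rho> h \<in> carrier_mat n n" using rep_carrier h repr reps by auto
    have wc: "w \<in> carrier_vec m" and Tw: "T *\<^sub>v w = 0\<^sub>v n" using w unfolding K_def by auto
    have "T *\<^sub>v (\<sigma> h *\<^sub>v w) = (T * \<sigma> h) *\<^sub>v w" using T sh wc by auto
    also have "\<dots> = (\<rho> h * T) *\<^sub>v w" using comm h by auto
    also have "\<dots> = \<rho> h *\<^sub>v (T *\<^sub>v w)" using T rh wc by auto
    finally show "\<sigma> h *\<^sub>v w \<in> K" unfolding K_def using Tw rh sh wc by auto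
  qed
  have "K \<noteq> carrier_vec m"
  proof
    assume "K = carrier_vec m"
    then have "T = 0\<^sub>m n m"
      by (intro mat_eq_by_vec[OF T]) (auto simp: K_def zero_mat_mult_vec_c)
    with nz show False by auto
  qed
  then have "K = {0\<^sub>v m}" using irr_noinv[OF irrs Ksub Kinv] by auto
  then have inj: "inj_mat T" by (intro inj_matI[OF T]) (auto simp: K_def)
  define I where "I = (\<lambda>x. T *\<^sub>v x) ` carrier_vec m"
  have Isub: "subspace_vec n I"
    unfolding subspace_vec_def
  proof (intro conjI ballI allI)
    show "I \<subseteq> carrier_vec n" unfolding I_def using T by auto
    show "0\<^sub>v n \<in> I" unfolding I_def using T by (auto intro!: image_eqI[of _ _ "0\<^sub>v m"])
    fix x y assume "x \<in> I" "y \<in> I"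
    then obtain a b where "a \<in> carrier_vec m" "b \<in> carrier_vec m" "x = T *\<^sub>v a" "y = T *\<^sub>v b"
      unfolding I_def by auto
    then show "x + y \<in> I" unfolding I_def using T
      by (auto simp: mult_add_distrib_mat_vec[symmetric] intro!: image_eqI[of _ _ "a + b"])
  next
    fix d :: complex and x assume "x \<in> I"
    then obtain a where "a \<in> carrier_vec m" "x = T *\<^sub>v a" unfolding I_def by auto
    then show "d \<cdot>\<^sub>v x \<in> I" unfolding I_def using T
      by (auto simp: mult_mat_vec[symmetric] intro!: image_eqI[of _ _ "d \<cdot>\<^sub>v a"])
  qed
  have Iinv: "\<forall>h\<in>carrier G. \<forall>w\<in>I. \<rho> h *\<^sub>v w \<in> I"
  proof (intro ballI)
    fix h w assume h: "h \<in> carrier G" and w: "w \<in> I"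
    have sh: "\<sigma> h \<in> carrier_mat m m" and rh: "\<rho> h \<in> carrier_mat n n" using rep_carrier h repr reps by auto
    obtain a where a: "a \<in> carrier_vec m" "w = T *\<^sub>v a" using w unfolding I_def by auto
    have "\<rho> h *\<^sub>v (T *\<^sub>v a) = (\<rho> h * T) *\<^sub>v a" using T rh a by auto
    also have "\<dots> = (T * \<sigma> h) *\<^sub>v a" using comm h by auto
    also have "\<dots> = T *\<^sub>v (\<sigma> h *\<^sub>v a)" using T sh a by auto
    finally show "\<rho> h *\<^sub>v w \<in> I" unfolding I_def using a sh by auto
  qed
  have "I \<noteq> {0\<^sub>v n}"
  proof
    assume "I = {0\<^sub>v n}"
    then have "T = 0\<^sub>m n m"
      by (intro mat_eq_by_vec[OF T]) (auto simp: I_def zero_mat_mult_vec_c)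
    with nz show False by auto
  qed
  then have Iall: "I = carrier_vec n" using irr_noinv[OF irrr Isub Iinv] by auto
  have "\<forall>i. \<exists>x. i < n \<longrightarrow> x \<in> carrier_vec m \<and> T *\<^sub>v x = unit_vec n i"
    using Iall unfolding I_def by (metis imageE unit_vec_carrier)
  then obtain s where s: "\<And>i. i < n \<Longrightarrow> s i \<in> carrier_vec m \<and> T *\<^sub>v s i = unit_vec n i"
    by metis
  define S where "S = mat_of_cols m (map s [0..<n])"
  have S: "S \<in> carrier_mat m n" unfolding S_def by auto
  have colS: "\<And>j. j < n \<Longrightarrow> col S j = s j" unfolding S_def using s by auto
  have TS: "T * S = 1\<^sub>m n"
  proof (rule eq_matI)
    fix i j assume i: "i < dim_row (1\<^sub>m n)" and j: "j < dim_col (1\<^sub>m n)"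
    then have "(T * S) $$ (i,j) = row T i \<bullet> s j" using T S colS by auto
    also have "\<dots> = (T *\<^sub>v s j) $ i" using T i by auto
    also have "\<dots> = 1\<^sub>m n $$ (i,j)" using s[of j] i j by auto
    finally show "(T * S) $$ (i,j) = 1\<^sub>m n $$ (i,j)" .
  qed (use T S in auto)
  have ST: "S * T = 1\<^sub>m m"
  proof (rule inj_mat_cancel_mat[OF T inj])
    show "S * T \<in> carrier_mat m m" using S T by auto
    show "1\<^sub>m m \<in> carrier_mat m m" by auto
    have "T * (S * T) = (T * S) * T" using T S by (simp add: assoc_mult_mat)
    also have "\<dots> = T" using TS T by auto
    also have "\<dots> = T * 1\<^sub>m m" using T by auto
    finally show "T * (S * T) = T * 1\<^sub>m m" .
  qed
  show ?thesis
  proof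
    fix h assume h: "h \<in> carrier G"
    have sh: "\<sigma> h \<in> carrier_mat m m" and rh: "\<rho> h \<in> carrier_mat n n" using rep_carrier h repr reps by auto
    have "mat_trace (\<sigma> h) = mat_trace ((S * T) * \<sigma> h)" using ST sh by auto
    also have "(S * T) * \<sigma> h = S * (T * \<sigma> h)" using S T sh by (simp add: assoc_mult_mat)
    also have "T * \<sigma> h = \<rho> h * T" using comm h by auto
    also have "mat_trace (S * (\<rho> h * T)) = mat_trace ((\<rho> h * T) * S)"
      by (rule mat_trace_comm[OF S]) (use rh T in auto)
    also have "(\<rho> h * T) * S = \<rho> h * (T * S)" using S T rh by (simp add: assoc_mult_mat)
    also have "\<dots> = \<rho> h" using TS rh by auto
    finally show "mat_trace (\<sigma> h) = mat_trace (\<rho> h)" .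
  qed
qed

lemma lmult_bij: "k \<in> carrier G \<Longrightarrow> bij_betw (\<lambda>h. k \<otimes> h) (carrier G) (carrier G)"
  by (rule bij_betw_byWitness[where f' = "\<lambda>h. inv k \<otimes> h"]) (auto simp: m_assoc[symmetric])

lemma inv_bij: "bij_betw (\<lambda>h. inv h) (carrier G) (carrier G)"
  by (rule bij_betw_byWitness[where f' = "\<lambda>h. inv h"]) auto

lemma avg_comm:
  assumes repr: "representation G n \<rho>" and reps: "representation G m \<sigma>" and A: "A \<in> carrier_mat n m"
    and k: "k \<in> carrier G"
  shows "\<rho> k * msum (\<lambda>h. \<rho> h * A * \<sigma> (inv h)) (carrier G) n m = msum (\<lambda>h. \<rho> h * A * \<sigma> (inv h)) (carrier G) n m * \<sigma> k"
proof -
  have rk: "\<rho> k \<in> carrier_mat n n" and sk: "\<sigma> k \<in> carrier_mat m m" using rep_carrier k repr reps by auto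
  have "\<rho> k * msum (\<lambda>h. \<rho> h * A * \<sigma> (inv h)) (carrier G) n m = msum (\<lambda>h. \<rho> k * (\<rho> h * A * \<sigma> (inv h))) (carrier G) n m"
    by (rule mult_msum_left[OF rk]) (use A rep_carrier[OF repr] rep_carrier[OF reps] in \<open>auto intro!: mult_carrier_mat\<close>)
  also have "\<dots> = msum (\<lambda>h. \<rho> (k \<otimes> h) * A * \<sigma> (inv h)) (carrier G) n m"
  proof (rule msum_cong)
    fix h assume h: "h \<in> carrier G"
    have rh: "\<rho> h \<in> carrier_mat n n" and sh: "\<sigma> (inv h) \<in> carrier_mat m m" using rep_carrier h repr reps by auto
    have "\<rho> k * (\<rho> h * A * \<sigma> (inv h)) = \<rho> k * (\<rho> h * A) * \<sigma> (inv h)"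
      using assoc_mult_mat[of "\<rho> k" n n "\<rho> h * A" m "\<sigma> (inv h)" m] rk rh sh A by auto
    also have "\<rho> k * (\<rho> h * A) = \<rho> k * \<rho> h * A"
      using assoc_mult_mat[of "\<rho> k" n n "\<rho> h" n A m] rk rh A by auto
    finally show "\<rho> k * (\<rho> h * A * \<sigma> (inv h)) = \<rho> (k \<otimes> h) * A * \<sigma> (inv h)"
      using rep_mult[OF repr k h] by simp
  qed
  also have "\<dots> = msum (\<lambda>h. \<rho> (k \<otimes> h) * A * \<sigma> (inv (k \<otimes> h) \<otimes> k)) (carrier G) n m"
    by (rule msum_cong) (use k in \<open>simp add: inv_mult_group m_assoc\<close>)
  also have "\<dots> = msum (\<lambda>h. \<rho> h * A * \<sigma> (inv h \<otimes> k)) (carrier G) n m"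
    by (rule msum_reindex[OF lmult_bij[OF k], symmetric])
  also have "\<dots> = msum (\<lambda>h. \<rho> h * A * \<sigma> (inv h) * \<sigma> k) (carrier G) n m"
  proof (rule msum_cong)
    fix h assume h: "h \<in> carrier G"
    have rh: "\<rho> h \<in> carrier_mat n n" and sh: "\<sigma> (inv h) \<in> carrier_mat m m" using rep_carrier h repr reps by auto
    show "\<rho> h * A * \<sigma> (inv h \<otimes> k) = \<rho> h * A * \<sigma> (inv h) * \<sigma> k"
      using rep_mult[OF reps _ k, of "inv h"] h assoc_mult_mat[of "\<rho> h * A" n m "\<sigma> (inv h)" m "\<sigma> k" m] rh sh sk A
      by auto
  qed
  also have "\<dots> = msum (\<lambda>h. \<rho> h * A * \<sigma> (inv h)) (carrier G) n m * \<sigma> k"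
    by (rule mult_msum_right[OF sk, symmetric]) (use A rep_carrier[OF repr] rep_carrier[OF reps] in \<open>auto intro!: mult_carrier_mat\<close>)
  finally show ?thesis .
qed

end

definition Emat :: "nat \<Rightarrow> nat \<Rightarrow> nat \<Rightarrow> nat \<Rightarrow> complex mat" where
  "Emat n m j k = mat n m (\<lambda>(a,b). if a = j \<and> b = k then 1 else 0)"

lemma Emat_carrier[simp]: "Emat n m j k \<in> carrier_mat n m"
  unfolding Emat_def by auto

lemma Emat_mult_entry:
  assumes X: "X \<in> carrier_mat n n" and Y: "Y \<in> carrier_mat m m" and jk: "j < n" "k < m" and il: "i < n" "l < m"
  shows "(X * Emat n m j k * Y) $$ (i,l) = X $$ (i,j) * Y $$ (k,l)"
proof -
  have XE: "\<And>b. b < m \<Longrightarrow> (X * Emat n m j k) $$ (i,b) = (if b = k then X $$ (i,j) else 0)"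
  proof -
    fix b assume b: "b < m"
    have "(X * Emat n m j k) $$ (i,b) = (\<Sum>a<n. X $$ (i,a) * Emat n m j k $$ (a,b))"
      by (rule mult_entry[OF X Emat_carrier il(1) b])
    also have "\<dots> = (\<Sum>a<n. if a = j then (if b = k then X $$ (i,j) else 0) else 0)"
      using b by (intro sum.cong) (auto simp: Emat_def)
    also have "\<dots> = (if b = k then X $$ (i,j) else 0)" using jk by simp
    finally show "(X * Emat n m j k) $$ (i,b) = (if b = k then X $$ (i,j) else 0)" .
  qed
  have "(X * Emat n m j k * Y) $$ (i,l) = (\<Sum>b<m. (X * Emat n m j k) $$ (i,b) * Y $$ (b,l))"
    by (rule mult_entry[OF _ Y il]) (use X in auto)
  also have "\<dots> = (\<Sum>b<m. if b = k then X $$ (i,j) * Y $$ (k,l) else 0)"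
    by (intro sum.cong) (auto simp: XE)
  also have "\<dots> = X $$ (i,j) * Y $$ (k,l)" using jk by simp
  finally show ?thesis .
qed

lemma mat_trace_Emat: "j < n \<Longrightarrow> k < n \<Longrightarrow> mat_trace (Emat n n j k) = (if j = k then 1 else 0)"
  unfolding mat_trace_def Emat_def by auto

context fgroup
begin

lemma avg_entry:
  assumes repr: "representation G n \<rho>" and reps: "representation G m \<sigma>" and jk: "j < n" "k < m" and il: "i < n" "l < m"
  shows "msum (\<lambda>h. \<rho> h * Emat n m j k * \<sigma> (inv h)) (carrier G) n m $$ (i,l)
    = (\<Sum>h\<in>carrier G. \<rho> h $$ (i,j) * \<sigma> (inv h) $$ (k,l))"
  using il by (auto simp: msum_index intro!: sum.cong Emat_mult_entry[OF rep_carrier[OF repr] rep_carrier[OF reps] jk il])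

lemma orth_entries_diff:
  assumes irrr: "irreducible_rep G n \<rho>" and irrs: "irreducible_rep G m \<sigma>"
    and diff: "\<exists>h\<in>carrier G. mat_trace (\<rho> h) \<noteq> mat_trace (\<sigma> h)"
    and jk: "j < n" "k < m" and il: "i < n" "l < m"
  shows "(\<Sum>h\<in>carrier G. \<rho> h $$ (i,j) * \<sigma> (inv h) $$ (k,l)) = 0"
proof -
  have repr: "representation G n \<rho>" and reps: "representation G m \<sigma>" using irrr irrs irr_rep by auto
  let ?T = "msum (\<lambda>h. \<rho> h * Emat n m j k * \<sigma> (inv h)) (carrier G) n m"
  have "?T = 0\<^sub>m n m"
  proof (rule ccontr)
    assume "?T \<noteq> 0\<^sub>m n m"
    from intertwine_trace[OF irrr irrs msum_carrier _ this] avg_comm[OF repr reps Emat_carrier]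
    have "\<forall>h\<in>carrier G. mat_trace (\<sigma> h) = mat_trace (\<rho> h)" by auto
    with diff show False by auto
  qed
  then have "?T $$ (i,l) = 0" using il by auto
  then show ?thesis using avg_entry[OF repr reps jk il] by auto
qed

lemma orth_entries_same:
  assumes irr: "irreducible_rep G n \<rho>" and jk: "j < n" "k < n" and il: "i < n" "l < n"
  shows "(\<Sum>h\<in>carrier G. \<rho> h $$ (i,j) * \<rho> (inv h) $$ (k,l))
     = (if i = l \<and> j = k then of_nat (card (carrier G)) / of_nat n else 0)"
proof -
  have rep: "representation G n \<rho>" and n: "0 < n" using irr irr_rep irr_pos by auto
  let ?T = "msum (\<lambda>h. \<rho> h * Emat n n j k * \<rho> (inv h)) (carrier G) n n"
  have comm: "\<forall>h\<in>carrier G. \<rho> h * ?T = ?T * \<rho> h" using avg_comm[OF rep rep Emat_carrier] by blast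
  obtain c where c: "?T = c \<cdot>\<^sub>m 1\<^sub>m n"
    using schur_scalar[OF irr msum_carrier comm] by blast
  have "mat_trace ?T = (\<Sum>h\<in>carrier G. mat_trace (\<rho> h * Emat n n j k * \<rho> (inv h)))"
  proof (rule msum_trace)
    fix h assume h: "h \<in> carrier G"
    then have "\<rho> h \<in> carrier_mat n n" "\<rho> (inv h) \<in> carrier_mat n n" using rep_carrier[OF rep] by auto
    then show "\<rho> h * Emat n n j k * \<rho> (inv h) \<in> carrier_mat n n" by (auto intro!: mult_carrier_mat)
  qed
  also have "\<dots> = (\<Sum>h\<in>carrier G. (if j = k then 1 else 0))"
  proof (rule sum.cong)
    fix h assume h: "h \<in> carrier G"
    have rh: "\<rho> h \<in> carrier_mat n n" and ri: "\<rho> (inv h) \<in> carrier_mat n n" using rep_carrier[OF rep] h by auto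
    have "mat_trace (\<rho> h * Emat n n j k * \<rho> (inv h)) = mat_trace (\<rho> h * (Emat n n j k * \<rho> (inv h)))"
      using assoc_mult_mat[OF rh Emat_carrier ri] by simp
    also have "\<dots> = mat_trace ((Emat n n j k * \<rho> (inv h)) * \<rho> h)"
      by (rule mat_trace_comm[OF rh]) (use ri in \<open>auto intro!: mult_carrier_mat\<close>)
    also have "(Emat n n j k * \<rho> (inv h)) * \<rho> h = Emat n n j k * (\<rho> (inv h) * \<rho> h)"
      using assoc_mult_mat[OF Emat_carrier ri rh] by simp
    also have "\<dots> = Emat n n j k" using rep_inv_l[OF rep h] right_mult_one_mat[OF Emat_carrier] by auto
    finally show "mat_trace (\<rho> h * Emat n n j k * \<rho> (inv h)) = (if j = k then 1 else 0)"
      using mat_trace_Emat[OF jk] by simp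
  qed simp
  finally have trT: "mat_trace ?T = (if j = k then of_nat (card (carrier G)) else 0)" by simp
  have "mat_trace ?T = c * of_nat n" using c mat_trace_smult[of "1\<^sub>m n" n c] by auto
  with trT have cv: "c = (if j = k then of_nat (card (carrier G)) / of_nat n else 0)"
    using n by (auto simp: field_simps split: if_splits)
  have "?T $$ (i,l) = (if i = l then c else 0)" using c il by auto
  then show ?thesis using avg_entry[OF rep rep jk il] cv by auto
qed

lemma rep_trace: "representation G n \<rho> \<Longrightarrow> h \<in> carrier G \<Longrightarrow> mat_trace (\<rho> h) = (\<Sum>i<n. \<rho> h $$ (i,i))"
  using mat_trace_sq rep_carrier by blast

lemma char_orth_diff:
  assumes irrr: "irreducible_rep G n \<rho>" and irrs: "irreducible_rep G m \<sigma>"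
    and diff: "\<exists>h\<in>carrier G. mat_trace (\<rho> h) \<noteq> mat_trace (\<sigma> h)"
  shows "(\<Sum>h\<in>carrier G. mat_trace (\<rho> h) * mat_trace (\<sigma> (inv h))) = 0"
proof -
  have repr: "representation G n \<rho>" and reps: "representation G m \<sigma>" using irrr irrs irr_rep by auto
  have "(\<Sum>h\<in>carrier G. mat_trace (\<rho> h) * mat_trace (\<sigma> (inv h)))
     = (\<Sum>h\<in>carrier G. \<Sum>i<n. \<Sum>k<m. \<rho> h $$ (i,i) * \<sigma> (inv h) $$ (k,k))"
    by (intro sum.cong) (auto simp: rep_trace[OF repr] rep_trace[OF reps] sum_product)
  also have "\<dots> = (\<Sum>i<n. \<Sum>h\<in>carrier G. \<Sum>k<m. \<rho> h $$ (i,i) * \<sigma> (inv h) $$ (k,k))"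
    by (rule sum.swap)
  also have "\<dots> = (\<Sum>i<n. \<Sum>k<m. \<Sum>h\<in>carrier G. \<rho> h $$ (i,i) * \<sigma> (inv h) $$ (k,k))"
    by (rule sum.cong[OF refl], rule sum.swap)
  also have "\<dots> = 0"
  proof (rule sum.neutral, rule ballI, rule sum.neutral, rule ballI)
    fix i k assume "i \<in> {..<n}" "k \<in> {..<m}"
    then show "(\<Sum>h\<in>carrier G. \<rho> h $$ (i,i) * \<sigma> (inv h) $$ (k,k)) = 0"
      using orth_entries_diff[OF irrr irrs diff] by auto
  qed
  finally show ?thesis .
qed

lemma char_orth_same:
  assumes irr: "irreducible_rep G n \<rho>"
  shows "(\<Sum>h\<in>carrier G. mat_trace (\<rho> h) * mat_trace (\<rho> (inv h))) = of_nat (card (carrier G))"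
proof -
  have rep: "representation G n \<rho>" and n: "0 < n" using irr irr_rep irr_pos by auto
  have "(\<Sum>h\<in>carrier G. mat_trace (\<rho> h) * mat_trace (\<rho> (inv h)))
     = (\<Sum>h\<in>carrier G. \<Sum>i<n. \<Sum>k<n. \<rho> h $$ (i,i) * \<rho> (inv h) $$ (k,k))"
    by (intro sum.cong) (auto simp: rep_trace[OF rep] sum_product)
  also have "\<dots> = (\<Sum>i<n. \<Sum>h\<in>carrier G. \<Sum>k<n. \<rho> h $$ (i,i) * \<rho> (inv h) $$ (k,k))"
    by (rule sum.swap)
  also have "\<dots> = (\<Sum>i<n. \<Sum>k<n. \<Sum>h\<in>carrier G. \<rho> h $$ (i,i) * \<rho> (inv h) $$ (k,k))"
    by (rule sum.cong[OF refl], rule sum.swap)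
  also have "\<dots> = (\<Sum>i<n. \<Sum>k<n. if i = k then of_nat (card (carrier G)) / of_nat n else 0)"
  proof (rule sum.cong[OF refl], rule sum.cong[OF refl])
    fix i k assume "i \<in> {..<n}" "k \<in> {..<n}"
    then show "(\<Sum>h\<in>carrier G. \<rho> h $$ (i,i) * \<rho> (inv h) $$ (k,k)) = (if i = k then of_nat (card (carrier G)) / of_nat n else 0)"
      using orth_entries_same[OF irr, of i k i k] by auto
  qed
  also have "\<dots> = (\<Sum>i<n. of_nat (card (carrier G)) / of_nat n)" by simp
  also have "\<dots> = of_nat (card (carrier G))" using n by simp
  finally show ?thesis .
qed

lemma irr_charsE:
  assumes "\<chi> \<in> irr_chars G"
  obtains n \<rho> where "irreducible_rep G n \<rho>" "\<chi> = (\<lambda>g\<in>carrier G. mat_trace (\<rho> g))"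
  using assms unfolding irr_chars_def by auto

lemma irr_chars_orth:
  assumes "\<chi> \<in> irr_chars G" "\<psi> \<in> irr_chars G"
  shows "(\<Sum>h\<in>carrier G. \<chi> h * \<psi> (inv h)) = (if \<chi> = \<psi> then of_nat (card (carrier G)) else 0)"
proof -
  obtain n \<rho> where irrr: "irreducible_rep G n \<rho>" and chi: "\<chi> = (\<lambda>g\<in>carrier G. mat_trace (\<rho> g))"
    using assms(1) by (rule irr_charsE)
  obtain m \<sigma> where irrs: "irreducible_rep G m \<sigma>" and psi: "\<psi> = (\<lambda>g\<in>carrier G. mat_trace (\<sigma> g))"
    using assms(2) by (rule irr_charsE)
  show ?thesis
  proof (cases "\<chi> = \<psi>")
    case True
    have "(\<Sum>h\<in>carrier G. \<chi> h * \<psi> (inv h)) = (\<Sum>h\<in>carrier G. mat_trace (\<rho> h) * mat_trace (\<rho> (inv h)))"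
      using True chi by (intro sum.cong) auto
    then show ?thesis using char_orth_same[OF irrr] True by simp
  next
    case False
    then obtain h where "\<chi> h \<noteq> \<psi> h" by auto
    then have "h \<in> carrier G" "mat_trace (\<rho> h) \<noteq> mat_trace (\<sigma> h)" using chi psi by (auto split: if_splits)
    then have "(\<Sum>h\<in>carrier G. mat_trace (\<rho> h) * mat_trace (\<sigma> (inv h))) = 0"
      using char_orth_diff[OF irrr irrs] by blast
    moreover have "(\<Sum>h\<in>carrier G. \<chi> h * \<psi> (inv h)) = (\<Sum>h\<in>carrier G. mat_trace (\<rho> h) * mat_trace (\<sigma> (inv h)))"
      using chi psi by (intro sum.cong) auto
    ultimately show ?thesis using False by simp
  qed
qed

end

lemma mult_unit_col: "(A :: complex mat) \<in> carrier_mat n m \<Longrightarrow> j < m \<Longrightarrow> A *\<^sub>v unit_vec m j = col A j"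
  by (intro eq_vecI) (auto simp: scalar_prod_right_unit)

lemma mat_eq_by_unit:
  assumes A: "(A :: complex mat) \<in> carrier_mat n m" and C: "C \<in> carrier_mat n m"
    and eq: "\<And>j. j < m \<Longrightarrow> A *\<^sub>v unit_vec m j = C *\<^sub>v unit_vec m j"
  shows "A = C"
proof (rule eq_matI)
  fix i j assume "i < dim_row C" "j < dim_col C"
  then have i: "i < n" and j: "j < m" using C by auto
  have "A $$ (i,j) = (A *\<^sub>v unit_vec m j) $ i" by (rule mat_entry_vec[OF A i j])
  also have "\<dots> = (C *\<^sub>v unit_vec m j) $ i" using eq[OF j] by simp
  also have "\<dots> = C $$ (i,j)" by (rule mat_entry_vec[OF C i j, symmetric])
  finally show "A $$ (i,j) = C $$ (i,j)" .
qed (use A C in auto)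

context fgroup
begin

lemma subrep:
  assumes rep: "representation G N R" and B: "B \<in> carrier_mat N m" and inj: "inj_mat B"
    and inv: "\<forall>h\<in>carrier G. \<forall>x\<in>carrier_vec m. \<exists>y\<in>carrier_vec m. R h *\<^sub>v (B *\<^sub>v x) = B *\<^sub>v y"
  shows "\<exists>\<rho>. representation G m \<rho> \<and> (\<forall>h\<in>carrier G. R h * B = B * \<rho> h)"
proof -
  have ex: "\<And>h j. h \<in> carrier G \<Longrightarrow> j < m \<Longrightarrow> \<exists>y. y \<in> carrier_vec m \<and> R h *\<^sub>v (B *\<^sub>v unit_vec m j) = B *\<^sub>v y"
    using inv unit_vec_carrier by blast
  define y where "y h j = (SOME y. y \<in> carrier_vec m \<and> R h *\<^sub>v (B *\<^sub>v unit_vec m j) = B *\<^sub>v y)" for h j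
  have y: "\<And>h j. h \<in> carrier G \<Longrightarrow> j < m \<Longrightarrow> y h j \<in> carrier_vec m \<and> R h *\<^sub>v (B *\<^sub>v unit_vec m j) = B *\<^sub>v y h j"
    unfolding y_def by (rule someI_ex, rule ex)
  define \<rho> where "\<rho> h = mat_of_cols m (map (y h) [0..<m])" for h
  have \<rho>c: "\<rho> h \<in> carrier_mat m m" for h unfolding \<rho>_def by auto
  have col\<rho>: "h \<in> carrier G \<Longrightarrow> j < m \<Longrightarrow> col (\<rho> h) j = y h j" for h j
    unfolding \<rho>_def using y by auto
  have inter: "R h * B = B * \<rho> h" if h: "h \<in> carrier G" for h
  proof (rule mat_eq_by_unit)
    have Rh: "R h \<in> carrier_mat N N" using rep_carrier[OF rep h] .
    show "R h * B \<in> carrier_mat N m" using Rh B by auto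
    show "B * \<rho> h \<in> carrier_mat N m" using \<rho>c B by auto
    fix j assume j: "j < m"
    have "(R h * B) *\<^sub>v unit_vec m j = R h *\<^sub>v (B *\<^sub>v unit_vec m j)" using Rh B by auto
    also have "\<dots> = B *\<^sub>v y h j" using y[OF h j] by auto
    also have "y h j = \<rho> h *\<^sub>v unit_vec m j" using mult_unit_col[OF \<rho>c j] col\<rho>[OF h j] by auto
    also have "B *\<^sub>v (\<rho> h *\<^sub>v unit_vec m j) = (B * \<rho> h) *\<^sub>v unit_vec m j"
      by (rule assoc_mult_mat_vec[symmetric, OF B \<rho>c unit_vec_carrier])
    finally show "(R h * B) *\<^sub>v unit_vec m j = (B * \<rho> h) *\<^sub>v unit_vec m j" .
  qed
  have "representation G m \<rho>"
    unfolding representation_def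
  proof (intro conjI ballI)
    show "\<And>g. \<rho> g \<in> carrier_mat m m" by (rule \<rho>c)
    have "B * \<rho> \<one> = R \<one> * B" using inter by auto
    also have "\<dots> = B" using rep_one[OF rep] B by auto
    also have "\<dots> = B * 1\<^sub>m m" using B by auto
    finally show "\<rho> \<one> = 1\<^sub>m m" using inj_mat_cancel_mat[OF B inj \<rho>c] by auto
  next
    fix h k assume h: "h \<in> carrier G" and k: "k \<in> carrier G"
    have Rh: "R h \<in> carrier_mat N N" using rep_carrier[OF rep h] .
    have Rk: "R k \<in> carrier_mat N N" using rep_carrier[OF rep k] .
    have "B * \<rho> (h \<otimes> k) = R (h \<otimes> k) * B" using inter h k by auto
    also have "\<dots> = R h * (R k * B)" unfolding rep_mult[OF rep h k] by (rule assoc_mult_mat[OF Rh Rk B])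
    also have "\<dots> = R h * (B * \<rho> k)" using inter k by auto
    also have "\<dots> = (R h * B) * \<rho> k" by (rule assoc_mult_mat[symmetric, OF Rh B \<rho>c])
    also have "\<dots> = (B * \<rho> h) * \<rho> k" using inter h by auto
    also have "\<dots> = B * (\<rho> h * \<rho> k)" by (rule assoc_mult_mat[OF B \<rho>c \<rho>c])
    finally have eq: "B * \<rho> (h \<otimes> k) = B * (\<rho> h * \<rho> k)" .
    show "\<rho> (h \<otimes> k) = \<rho> h * \<rho> k"
      by (rule inj_mat_cancel_mat[OF B inj \<rho>c _ eq]) (rule mult_carrier_mat[OF \<rho>c \<rho>c])
  qed
  then show ?thesis using inter by auto
qed

lemma exists_irr_sub:
  assumes rep: "representation G N R" and E: "subspace_vec N E" and nz: "E \<noteq> {0\<^sub>v N}"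
    and Einv: "\<forall>h\<in>carrier G. \<forall>x\<in>E. R h *\<^sub>v x \<in> E"
  shows "\<exists>m B \<rho>. 0 < m \<and> B \<in> carrier_mat N m \<and> inj_mat B \<and> (\<forall>x\<in>carrier_vec m. B *\<^sub>v x \<in> E)
     \<and> irreducible_rep G m \<rho> \<and> (\<forall>h\<in>carrier G. R h * B = B * \<rho> h)"
proof -
  define P where "P m \<longleftrightarrow> (\<exists>B \<rho>. 0 < m \<and> B \<in> carrier_mat N m \<and> inj_mat B \<and> (\<forall>x\<in>carrier_vec m. B *\<^sub>v x \<in> E)
     \<and> representation G m \<rho> \<and> (\<forall>h\<in>carrier G. R h * B = B * \<rho> h))" for m
  have "\<exists>m. P m"
  proof -
    obtain k C where k: "0 < k" and C: "C \<in> carrier_mat N k" and inj: "inj_mat C"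
      and im: "(\<lambda>x. C *\<^sub>v x) ` carrier_vec k = E"
      using subspace_basis_nz[OF E nz] by auto
    have "\<forall>h\<in>carrier G. \<forall>x\<in>carrier_vec k. \<exists>y\<in>carrier_vec k. R h *\<^sub>v (C *\<^sub>v x) = C *\<^sub>v y"
    proof (intro ballI)
      fix h and x :: "complex vec" assume h: "h \<in> carrier G" and x: "x \<in> carrier_vec k"
      have "C *\<^sub>v x \<in> E" using im x by auto
      then have "R h *\<^sub>v (C *\<^sub>v x) \<in> E" using Einv h by auto
      then show "\<exists>y\<in>carrier_vec k. R h *\<^sub>v (C *\<^sub>v x) = C *\<^sub>v y" using im by auto
    qed
    from subrep[OF rep C inj this] obtain \<rho> where "representation G k \<rho>" "\<forall>h\<in>carrier G. R h * C = C * \<rho> h"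
      by auto
    then have "P k" unfolding P_def using k C inj im by blast
    then show ?thesis by auto
  qed
  define m0 where "m0 = (LEAST m. P m)"
  have Pm0: "P m0" unfolding m0_def by (rule LeastI_ex) fact
  then obtain B \<rho> where m0: "0 < m0" and B: "B \<in> carrier_mat N m0" and inj: "inj_mat B"
    and BE: "\<forall>x\<in>carrier_vec m0. B *\<^sub>v x \<in> E" and rep\<rho>: "representation G m0 \<rho>"
    and inter: "\<forall>h\<in>carrier G. R h * B = B * \<rho> h"
    unfolding P_def by blast
  have irr: "irreducible_rep G m0 \<rho>"
    unfolding irreducible_rep_def
  proof (intro conjI rep\<rho> m0 notI)
    assume "\<exists>W. subspace_vec m0 W \<and> W \<noteq> {0\<^sub>v m0} \<and> W \<noteq> carrier_vec m0 \<and> (\<forall>h\<in>carrier G. \<forall>w\<in>W. \<rho> h *\<^sub>v w \<in> W)"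
    then obtain W where W: "subspace_vec m0 W" "W \<noteq> {0\<^sub>v m0}" "W \<noteq> carrier_vec m0"
      and Winv: "\<forall>h\<in>carrier G. \<forall>w\<in>W. \<rho> h *\<^sub>v w \<in> W" by blast
    obtain k C where k: "0 < k" "k < m0" and C: "C \<in> carrier_mat m0 k" and injC: "inj_mat C"
      and im: "(\<lambda>x. C *\<^sub>v x) ` carrier_vec k = W"
      using subspace_basis_proper[OF W] by auto
    have BC: "B * C \<in> carrier_mat N k" using B C by auto
    have injBC: "inj_mat (B * C)"
    proof (rule inj_matI[OF BC])
      fix x :: "complex vec" assume x: "x \<in> carrier_vec k" and 0: "(B * C) *\<^sub>v x = 0\<^sub>v N"
      have "B *\<^sub>v (C *\<^sub>v x) = 0\<^sub>v N" using 0 B C x by auto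
      then have "C *\<^sub>v x = 0\<^sub>v m0" using inj_matD[OF inj B] C x by auto
      then show "x = 0\<^sub>v k" using inj_matD[OF injC C x] by auto
    qed
    have BCE: "\<forall>x\<in>carrier_vec k. (B * C) *\<^sub>v x \<in> E" using BE B C by auto
    have "\<forall>h\<in>carrier G. \<forall>x\<in>carrier_vec k. \<exists>y\<in>carrier_vec k. R h *\<^sub>v ((B * C) *\<^sub>v x) = (B * C) *\<^sub>v y"
    proof (intro ballI)
      fix h and x :: "complex vec" assume h: "h \<in> carrier G" and x: "x \<in> carrier_vec k"
      have Rh: "R h \<in> carrier_mat N N" using rep_carrier[OF rep h] .
      have rh: "\<rho> h \<in> carrier_mat m0 m0" using rep_carrier[OF rep\<rho> h] .
      have Cx: "C *\<^sub>v x \<in> W" using im x by auto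
      then have "\<rho> h *\<^sub>v (C *\<^sub>v x) \<in> W" using Winv h by auto
      then obtain y where y: "y \<in> carrier_vec k" "\<rho> h *\<^sub>v (C *\<^sub>v x) = C *\<^sub>v y" using im by auto
      have "R h *\<^sub>v ((B * C) *\<^sub>v x) = (R h * B) *\<^sub>v (C *\<^sub>v x)" using Rh B C x by auto
      also have "\<dots> = (B * \<rho> h) *\<^sub>v (C *\<^sub>v x)" using inter h by auto
      also have "\<dots> = B *\<^sub>v (C *\<^sub>v y)" using B rh C x y by auto
      also have "\<dots> = (B * C) *\<^sub>v y" using B C y by auto
      finally show "\<exists>y\<in>carrier_vec k. R h *\<^sub>v ((B * C) *\<^sub>v x) = (B * C) *\<^sub>v y" using y by auto
    qed
    from subrep[OF rep BC injBC this] obtain \<rho>' where "representation G k \<rho>'" "\<forall>h\<in>carrier G. R h * (B * C) = (B * C) * \<rho>' h"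
      by auto
    then have "P k" unfolding P_def using k BC injBC BCE by blast
    then have "m0 \<le> k" unfolding m0_def by (rule Least_le)
    with k show False by auto
  qed
  show ?thesis using m0 B inj BE irr inter by blast
qed

end

section \<open>Adjoint\<close>

definition adj :: "complex mat \<Rightarrow> complex mat" where
  "adj A = mat (dim_col A) (dim_row A) (\<lambda>(i,j). cnj (A $$ (j,i)))"

lemma adj_carrier[simp]: "A \<in> carrier_mat n m \<Longrightarrow> adj A \<in> carrier_mat m n"
  unfolding adj_def by auto

lemma adj_dims[simp]: "dim_row (adj A) = dim_col A" "dim_col (adj A) = dim_row A"
  unfolding adj_def by auto

lemma adj_index[simp]: "i < dim_col A \<Longrightarrow> j < dim_row A \<Longrightarrow> adj A $$ (i,j) = cnj (A $$ (j,i))"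
  unfolding adj_def by auto

lemma adj_adj[simp]: "adj (adj A) = A"
  by (rule eq_matI) auto

lemma adj_mult:
  assumes A: "A \<in> carrier_mat n m" and B: "B \<in> carrier_mat m k"
  shows "adj (A * B) = adj B * adj A"
proof (rule eq_matI)
  fix i j assume "i < dim_row (adj B * adj A)" "j < dim_col (adj B * adj A)"
  then have i: "i < k" and j: "j < n" using A B by auto
  have "adj (A * B) $$ (i,j) = cnj (\<Sum>l<m. A $$ (j,l) * B $$ (l,i))"
    using A B i j by (simp add: mult_entry[OF A B j i])
  also have "\<dots> = (\<Sum>l<m. cnj (B $$ (l,i)) * cnj (A $$ (j,l)))"
    by (simp add: mult.commute)
  also have "\<dots> = (adj B * adj A) $$ (i,j)"
    using A B i j by (simp add: mult_entry[OF adj_carrier[OF B] adj_carrier[OF A] i j])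
  finally show "adj (A * B) $$ (i,j) = (adj B * adj A) $$ (i,j)" .
qed (use A B in auto)

lemma adj_one[simp]: "adj (1\<^sub>m n) = 1\<^sub>m n"
  by (rule eq_matI) auto

lemma pow_mat_add:
  assumes A: "(A :: complex mat) \<in> carrier_mat n n"
  shows "A ^\<^sub>m (a + b) = A ^\<^sub>m a * A ^\<^sub>m b"
proof (induction b)
  case 0
  then show ?case using A by simp
next
  case (Suc b)
  have "A ^\<^sub>m (a + Suc b) = A ^\<^sub>m (a + b) * A" by simp
  also have "\<dots> = A ^\<^sub>m a * A ^\<^sub>m b * A" using Suc by simp
  also have "\<dots> = A ^\<^sub>m a * (A ^\<^sub>m b * A)"
    by (rule assoc_mult_mat[OF pow_carrier_mat[OF A] pow_carrier_mat[OF A] A])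
  finally show ?case by simp
qed

lemma pow_mat_Suc_comm':
  assumes A: "(A :: complex mat) \<in> carrier_mat n n"
  shows "A ^\<^sub>m k * A = A * A ^\<^sub>m k"
  using pow_mat_add[OF A, of k 1] pow_mat_add[OF A, of 1 k] A by simp

lemma adj_pow:
  assumes A: "A \<in> carrier_mat n n"
  shows "adj (A ^\<^sub>m k) = (adj A) ^\<^sub>m k"
proof (induction k)
  case 0
  then show ?case using A by auto
next
  case (Suc k)
  have "adj (A ^\<^sub>m Suc k) = adj (A ^\<^sub>m k * A)" by simp
  also have "\<dots> = adj A * adj (A ^\<^sub>m k)" by (rule adj_mult[OF pow_carrier_mat[OF A] A])
  also have "\<dots> = adj A * (adj A) ^\<^sub>m k" using Suc by simp
  also have "\<dots> = (adj A) ^\<^sub>m k * adj A" using pow_mat_Suc_comm'[of "adj A" n k] A by simp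
  finally show ?case by simp
qed

lemma adj_self_zero:
  assumes A: "A \<in> carrier_mat n m" and z: "adj A * A = 0\<^sub>m m m"
  shows "A = 0\<^sub>m n m"
proof (rule eq_matI)
  fix i j assume "i < dim_row (0\<^sub>m n m :: complex mat)" "j < dim_col (0\<^sub>m n m :: complex mat)"
  then have i: "i < n" and j: "j < m" by auto
  have "(adj A * A) $$ (j,j) = (\<Sum>l<n. cnj (A $$ (l,j)) * A $$ (l,j))"
    using mult_entry[OF adj_carrier[OF A] A j j] A j by auto
  also have "\<dots> = (\<Sum>l<n. complex_of_real ((cmod (A $$ (l,j)))\<^sup>2))"
  proof (intro sum.cong refl)
    fix l
    show "cnj (A $$ (l,j)) * A $$ (l,j) = complex_of_real ((cmod (A $$ (l,j)))\<^sup>2)"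
      using complex_norm_square[of "A $$ (l,j)"] by (simp add: mult.commute)
  qed
  also have "\<dots> = complex_of_real (\<Sum>l<n. (cmod (A $$ (l,j)))\<^sup>2)" by simp
  finally have e: "(adj A * A) $$ (j,j) = complex_of_real (\<Sum>l<n. (cmod (A $$ (l,j)))\<^sup>2)" .
  have zjj: "(adj A * A) $$ (j,j) = 0" using z j by simp
  have "complex_of_real (\<Sum>l<n. (cmod (A $$ (l,j)))\<^sup>2) = 0" by (metis e zjj)
  then have "(\<Sum>l<n. (cmod (A $$ (l,j)))\<^sup>2) = 0" by (metis of_real_eq_0_iff)
  then have "\<forall>l\<in>{..<n}. (cmod (A $$ (l,j)))\<^sup>2 = 0"
    by (subst sum_nonneg_eq_0_iff[symmetric]) auto
  then show "A $$ (i,j) = 0\<^sub>m n m $$ (i,j)" using i j by auto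
qed (use A in auto)

lemma herm_sq_zero:
  assumes P: "P \<in> carrier_mat n n" and h: "adj P = P" and z: "P ^\<^sub>m (2 * k) = 0\<^sub>m n n"
  shows "P ^\<^sub>m k = 0\<^sub>m n n"
proof -
  have Pk: "P ^\<^sub>m k \<in> carrier_mat n n" using P by auto
  have "adj (P ^\<^sub>m k) * P ^\<^sub>m k = P ^\<^sub>m k * P ^\<^sub>m k" using adj_pow[OF P] h by simp
  also have "\<dots> = P ^\<^sub>m (k + k)" using pow_mat_add[of P n k k] P by simp
  also have "\<dots> = 0\<^sub>m n n" using z by (simp add: mult_2)
  finally show ?thesis using adj_self_zero[OF Pk] by auto
qed

lemma herm_nilp:
  assumes P: "P \<in> carrier_mat n n" and h: "adj P = P" and z: "P ^\<^sub>m k = 0\<^sub>m n n"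
  shows "P = 0\<^sub>m n n"
proof -
  have pz: "P ^\<^sub>m (2 ^ j) = 0\<^sub>m n n \<Longrightarrow> P = 0\<^sub>m n n" for j
  proof (induction j)
    case 0
    then show ?case using P by simp
  next
    case (Suc j)
    then have "P ^\<^sub>m (2 * 2 ^ j) = 0\<^sub>m n n" by simp
    then show ?case using herm_sq_zero[OF P h] Suc.IH by blast
  qed
  have "k \<le> 2 ^ k" using less_exp[of k] by linarith
  then obtain d where d: "2 ^ k = k + d" using le_Suc_ex by blast
  have "P ^\<^sub>m (2 ^ k) = P ^\<^sub>m k * P ^\<^sub>m d" unfolding d using pow_mat_add[of P n k d] P by simp
  also have "\<dots> = 0\<^sub>m n n" using z P by simp
  finally show ?thesis using pz by blast
qed

section \<open>Nilpotency from trivial spectrum\<close>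

lemma strict_upper_pow:
  assumes B: "B \<in> carrier_mat n n" and su: "\<And>i j. i < n \<Longrightarrow> j < n \<Longrightarrow> j \<le> i \<Longrightarrow> B $$ (i,j) = (0::complex)"
  shows "i < n \<Longrightarrow> j < n \<Longrightarrow> j < i + k \<Longrightarrow> (B ^\<^sub>m k) $$ (i,j) = 0"
proof (induction k arbitrary: i j)
  case 0
  then show ?case using B by auto
next
  case (Suc k)
  have "(B ^\<^sub>m Suc k) $$ (i,j) = (\<Sum>l<n. (B ^\<^sub>m k) $$ (i,l) * B $$ (l,j))"
    using mult_entry[OF pow_carrier_mat[OF B] B Suc.prems(1,2)] by simp
  also have "\<dots> = 0"
  proof (rule sum.neutral, rule ballI)
    fix l assume l: "l \<in> {..<n}"
    show "(B ^\<^sub>m k) $$ (i,l) * B $$ (l,j) = 0"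
    proof (cases "l < i + k")
      case True
      then show ?thesis using Suc.IH[of i l] Suc.prems l by auto
    next
      case False
      then have "j \<le> l" using Suc.prems by auto
      then show ?thesis using su[of l j] l Suc.prems by auto
    qed
  qed
  finally show ?case .
qed

lemma nilp_of_spectrum:
  assumes A: "(A :: complex mat) \<in> carrier_mat n n" and ev: "\<And>c. eigenvalue A c \<Longrightarrow> c = 0"
  shows "A ^\<^sub>m n = 0\<^sub>m n n"
proof -
  obtain as where cp: "char_poly A = (\<Prod>a\<leftarrow>as. [:- a, 1:])" and len: "length as = n"
    using char_poly_factorized[OF A] by auto
  have as0: "a \<in> set as \<Longrightarrow> a = 0" for a
  proof -
    assume a: "a \<in> set as"
    have "poly (char_poly A) a = 0" unfolding cp poly_prod_list_zero_iff using a by auto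
    then show "a = 0" using ev eigenvalue_root_char_poly[OF A] by auto
  qed
  obtain B P Q where sd: "schur_decomposition A as = (B,P,Q)" by (cases "schur_decomposition A as") auto
  from schur_decomposition[OF A cp sd]
  have sim: "similar_mat_wit A B P Q" and ut: "upper_triangular B" and dg: "diag_mat B = as" by auto
  have B: "B \<in> carrier_mat n n" and Pc: "P \<in> carrier_mat n n" and Qc: "Q \<in> carrier_mat n n"
    using sim A unfolding similar_mat_wit_def by (auto simp: Let_def)
  have su: "B $$ (i,j) = 0" if "i < n" "j < n" "j \<le> i" for i j
  proof (cases "j = i")
    case True
    have "B $$ (i,i) \<in> set (diag_mat B)" unfolding diag_mat_def using that B by auto
    then show ?thesis using True dg as0 by auto
  next
    case False
    then show ?thesis using ut that B unfolding upper_triangular_def by auto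
  qed
  have "B ^\<^sub>m n = 0\<^sub>m n n"
    by (rule eq_matI) (use strict_upper_pow[OF B su] B in auto)
  then show ?thesis using similar_mat_wit_pow_id[OF sim, of n] Pc Qc by simp
qed


context fgroup
begin

definition classf :: "('a \<Rightarrow> complex) \<Rightarrow> bool" where
  "classf f \<longleftrightarrow> (\<forall>k\<in>carrier G. \<forall>u\<in>carrier G. f (k \<otimes> u \<otimes> inv k) = f u)"

definition opf :: "('a \<Rightarrow> complex mat) \<Rightarrow> nat \<Rightarrow> ('a \<Rightarrow> complex) \<Rightarrow> complex mat" where
  "opf \<rho> n f = msum (\<lambda>h. f h \<cdot>\<^sub>m \<rho> h) (carrier G) n n"

lemma opf_carrier[simp]: "opf \<rho> n f \<in> carrier_mat n n"
  unfolding opf_def by simp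

lemma opf_dims[simp]: "dim_row (opf \<rho> n f) = n" "dim_col (opf \<rho> n f) = n"
  unfolding opf_def by simp_all

lemma cancel1: "x \<in> carrier G \<Longrightarrow> y \<in> carrier G \<Longrightarrow> inv x \<otimes> (x \<otimes> y) = y"
  by (simp add: m_assoc[symmetric])

lemma cancel2: "x \<in> carrier G \<Longrightarrow> y \<in> carrier G \<Longrightarrow> x \<otimes> (inv x \<otimes> y) = y"
  by (simp add: m_assoc[symmetric])

lemma conj_bij: "k \<in> carrier G \<Longrightarrow> bij_betw (\<lambda>u. k \<otimes> u \<otimes> inv k) (carrier G) (carrier G)"
  by (rule bij_betw_byWitness[where f' = "\<lambda>u. inv k \<otimes> u \<otimes> k"]) (auto simp: m_assoc cancel1 cancel2)

lemma opf_comm: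
  assumes rep: "representation G n \<rho>" and cf: "classf f" and k: "k \<in> carrier G"
  shows "\<rho> k * opf \<rho> n f = opf \<rho> n f * \<rho> k"
proof -
  have rk: "\<rho> k \<in> carrier_mat n n" using rep_carrier[OF rep k] .
  have "\<rho> k * opf \<rho> n f = msum (\<lambda>h. \<rho> k * (f h \<cdot>\<^sub>m \<rho> h)) (carrier G) n n"
    unfolding opf_def by (rule mult_msum_left[OF rk]) (use rep_carrier[OF rep] in auto)
  also have "\<dots> = msum (\<lambda>h. f h \<cdot>\<^sub>m \<rho> (k \<otimes> h)) (carrier G) n n"
  proof (rule msum_cong)
    fix h assume h: "h \<in> carrier G"
    show "\<rho> k * (f h \<cdot>\<^sub>m \<rho> h) = f h \<cdot>\<^sub>m \<rho> (k \<otimes> h)"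
      using mult_smult_distrib[OF rk rep_carrier[OF rep h]] rep_mult[OF rep k h] by simp
  qed
  also have "\<dots> = msum (\<lambda>u. f (k \<otimes> u \<otimes> inv k) \<cdot>\<^sub>m \<rho> ((k \<otimes> u \<otimes> inv k) \<otimes> k)) (carrier G) n n"
    by (rule msum_cong) (use cf k in \<open>auto simp: classf_def m_assoc cancel1 cancel2\<close>)
  also have "\<dots> = msum (\<lambda>h. f h \<cdot>\<^sub>m \<rho> (h \<otimes> k)) (carrier G) n n"
    by (rule msum_reindex[OF conj_bij[OF k], symmetric])
  also have "\<dots> = msum (\<lambda>h. (f h \<cdot>\<^sub>m \<rho> h) * \<rho> k) (carrier G) n n"
  proof (rule msum_cong)
    fix h assume h: "h \<in> carrier G"
    show "f h \<cdot>\<^sub>m \<rho> (h \<otimes> k) = (f h \<cdot>\<^sub>m \<rho> h) * \<rho> k"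
      using mult_smult_assoc_mat[OF rep_carrier[OF rep h] rk] rep_mult[OF rep h k] by simp
  qed
  also have "\<dots> = opf \<rho> n f * \<rho> k"
    unfolding opf_def by (rule mult_msum_right[OF rk, symmetric]) (use rep_carrier[OF rep] in auto)
  finally show ?thesis .
qed

lemma opf_inter:
  assumes R: "representation G N R" and rep: "representation G m \<rho>" and B: "B \<in> carrier_mat N m"
    and inter: "\<forall>h\<in>carrier G. R h * B = B * \<rho> h"
  shows "opf R N f * B = B * opf \<rho> m f"
proof -
  have "opf R N f * B = msum (\<lambda>h. (f h \<cdot>\<^sub>m R h) * B) (carrier G) N m"
    unfolding opf_def by (rule mult_msum_right[OF B]) (use rep_carrier[OF R] in auto)
  also have "\<dots> = msum (\<lambda>h. B * (f h \<cdot>\<^sub>m \<rho> h)) (carrier G) N m"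
  proof (rule msum_cong)
    fix h assume h: "h \<in> carrier G"
    show "(f h \<cdot>\<^sub>m R h) * B = B * (f h \<cdot>\<^sub>m \<rho> h)"
      using mult_smult_assoc_mat[OF rep_carrier[OF R h] B] mult_smult_distrib[OF B rep_carrier[OF rep h]] inter h by simp
  qed
  also have "\<dots> = B * opf \<rho> m f"
    unfolding opf_def by (rule mult_msum_left[OF B, symmetric]) (use rep_carrier[OF rep] in auto)
  finally show ?thesis .
qed

lemma opf_trace:
  assumes rep: "representation G n \<rho>"
  shows "mat_trace (opf \<rho> n f) = (\<Sum>h\<in>carrier G. f h * mat_trace (\<rho> h))"
proof -
  have "mat_trace (opf \<rho> n f) = (\<Sum>h\<in>carrier G. mat_trace (f h \<cdot>\<^sub>m \<rho> h))"
    unfolding opf_def by (rule msum_trace) (use rep_carrier[OF rep] in auto)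
  also have "\<dots> = (\<Sum>h\<in>carrier G. f h * mat_trace (\<rho> h))"
  proof (intro sum.cong refl)
    fix h assume h: "h \<in> carrier G"
    show "mat_trace (f h \<cdot>\<^sub>m \<rho> h) = f h * mat_trace (\<rho> h)" using mat_trace_smult[OF rep_carrier[OF rep h]] .
  qed
  finally show ?thesis .
qed

lemma opf_irr_zero:
  assumes irr: "irreducible_rep G m \<rho>" and cf: "classf f"
    and z: "(\<Sum>h\<in>carrier G. f h * mat_trace (\<rho> h)) = 0"
  shows "opf \<rho> m f = 0\<^sub>m m m"
proof -
  have rep: "representation G m \<rho>" and m: "0 < m" using irr irr_rep irr_pos by auto
  obtain c where c: "opf \<rho> m f = c \<cdot>\<^sub>m 1\<^sub>m m"
    using schur_scalar[OF irr opf_carrier] opf_comm[OF rep cf] by blast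
  have "c * of_nat m = 0" using opf_trace[OF rep, of f] z c mat_trace_smult[of "1\<^sub>m m" m c] by auto
  then have "c = 0" using m by auto
  then show ?thesis using c by auto
qed

definition enum :: "nat \<Rightarrow> 'a" where
  "enum = (SOME e. bij_betw e {..<card (carrier G)} (carrier G))"

lemma enum_bij: "bij_betw enum {..<card (carrier G)} (carrier G)"
proof -
  obtain e where "bij_betw e {0..<card (carrier G)} (carrier G)" using ex_bij_betw_nat_finite[OF fin] by auto
  then have "\<exists>e. bij_betw e {..<card (carrier G)} (carrier G)" by (auto simp: atLeast0LessThan)
  then show ?thesis unfolding enum_def by (rule someI_ex)
qed

lemma enum_carrier: "i < card (carrier G) \<Longrightarrow> enum i \<in> carrier G"
  using enum_bij unfolding bij_betw_def by auto

lemma enum_inj: "i < card (carrier G) \<Longrightarrow> j < card (carrier G) \<Longrightarrow> enum i = enum j \<longleftrightarrow> i = j"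
  using enum_bij unfolding bij_betw_def inj_on_def by auto

lemma enum_surj: "x \<in> carrier G \<Longrightarrow> \<exists>i < card (carrier G). enum i = x"
proof -
  assume x: "x \<in> carrier G"
  then have "x \<in> enum ` {..<card (carrier G)}" using enum_bij unfolding bij_betw_def by auto
  then show ?thesis by auto
qed

lemma sum_enum:
  assumes x: "x \<in> carrier G"
  shows "(\<Sum>l<card (carrier G). if enum l = x then g l else 0) = (\<Sum>l<card (carrier G). if l = (SOME i. i < card (carrier G) \<and> enum i = x) then g l else 0)"
proof -
  let ?i = "SOME i. i < card (carrier G) \<and> enum i = x"
  have i: "?i < card (carrier G) \<and> enum ?i = x" using someI_ex[OF enum_surj[OF x]] .
  show ?thesis using i enum_inj by (intro sum.cong refl) auto
qed

lemma sum_enum':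
  assumes x: "x \<in> carrier G"
  shows "\<exists>i < card (carrier G). enum i = x \<and> (\<forall>g. (\<Sum>l<card (carrier G). if enum l = x then g l else 0) = g i)"
proof -
  let ?i = "SOME i. i < card (carrier G) \<and> enum i = x"
  have i: "?i < card (carrier G) \<and> enum ?i = x" using someI_ex[OF enum_surj[OF x]] .
  show ?thesis using i sum_enum[OF x] by (intro exI[of _ ?i]) auto
qed

definition regrep :: "'a \<Rightarrow> complex mat" where
  "regrep h = mat (card (carrier G)) (card (carrier G)) (\<lambda>(i,j). if enum i = h \<otimes> enum j then 1 else 0)"

lemma regrep_rep: "representation G (card (carrier G)) regrep"
  unfolding representation_def
proof (intro conjI ballI)
  let ?N = "card (carrier G)"
  show "\<And>g. regrep g \<in> carrier_mat ?N ?N" unfolding regrep_def by auto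
  show "regrep \<one> = 1\<^sub>m ?N"
    unfolding regrep_def by (rule eq_matI) (auto simp: enum_carrier enum_inj)
  fix h k assume h: "h \<in> carrier G" and k: "k \<in> carrier G"
  show "regrep (h \<otimes> k) = regrep h * regrep k"
  proof (rule eq_matI)
    fix i j assume "i < dim_row (regrep h * regrep k)" "j < dim_col (regrep h * regrep k)"
    then have i: "i < ?N" and j: "j < ?N" unfolding regrep_def by auto
    have x: "k \<otimes> enum j \<in> carrier G" using k enum_carrier[OF j] by auto
    obtain l0 where l0: "l0 < ?N" "enum l0 = k \<otimes> enum j"
      and sl: "\<And>g :: nat \<Rightarrow> complex. (\<Sum>l<?N. if enum l = k \<otimes> enum j then g l else 0) = g l0"
      using sum_enum'[OF x] by blast
    have "(regrep h * regrep k) $$ (i,j) = (\<Sum>l<?N. regrep h $$ (i,l) * regrep k $$ (l,j))"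
      by (rule mult_entry) (use i j in \<open>auto simp: regrep_def\<close>)
    also have "\<dots> = (\<Sum>l<?N. if enum l = k \<otimes> enum j then (if enum i = h \<otimes> enum l then 1 else 0) else 0)"
      using i j by (intro sum.cong refl) (auto simp: regrep_def)
    also have "\<dots> = (if enum i = h \<otimes> enum l0 then 1 else 0)"
      using sl[of "\<lambda>l. if enum i = h \<otimes> enum l then 1 else 0"] by simp
    also have "\<dots> = regrep (h \<otimes> k) $$ (i,j)"
      using i j l0 h k enum_carrier[OF j] by (auto simp: regrep_def m_assoc)
    finally show "regrep (h \<otimes> k) $$ (i,j) = (regrep h * regrep k) $$ (i,j)" by simp
  qed (auto simp: regrep_def)
qed

lemma opf_reg_entry:
  assumes i: "i < card (carrier G)" and j: "j < card (carrier G)"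
  shows "opf regrep (card (carrier G)) f $$ (i,j) = f (enum i \<otimes> inv (enum j))"
proof -
  have ei: "enum i \<in> carrier G" and ej: "enum j \<in> carrier G" using enum_carrier i j by auto
  have "opf regrep (card (carrier G)) f $$ (i,j) = (\<Sum>h\<in>carrier G. f h * (if enum i = h \<otimes> enum j then 1 else 0))"
    unfolding opf_def using i j by (auto simp: msum_index regrep_def)
  also have "\<dots> = (\<Sum>h\<in>carrier G. if h = enum i \<otimes> inv (enum j) then f h else 0)"
  proof (intro sum.cong refl)
    fix h assume h: "h \<in> carrier G"
    have "enum i = h \<otimes> enum j \<longleftrightarrow> h = enum i \<otimes> inv (enum j)"
      using h ei ej by (metis inv_solve_right)
    then show "f h * (if enum i = h \<otimes> enum j then 1 else 0) = (if h = enum i \<otimes> inv (enum j) then f h else 0)"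
      by auto
  qed
  also have "\<dots> = f (enum i \<otimes> inv (enum j))" using ei ej by (simp add: sum.delta[OF fin])
  finally show ?thesis .
qed

lemma classf_conj: "classf f \<Longrightarrow> classf (\<lambda>h. cnj (f (inv h)))"
  unfolding classf_def by (auto simp: inv_mult_group m_assoc)

lemma adj_opf_reg: "adj (opf regrep (card (carrier G)) f) = opf regrep (card (carrier G)) (\<lambda>h. cnj (f (inv h)))"
proof (rule eq_matI)
  fix i j assume "i < dim_row (opf regrep (card (carrier G)) (\<lambda>h. cnj (f (inv h))))"
    "j < dim_col (opf regrep (card (carrier G)) (\<lambda>h. cnj (f (inv h))))"
  then have i: "i < card (carrier G)" and j: "j < card (carrier G)" by auto
  have ei: "enum i \<in> carrier G" and ej: "enum j \<in> carrier G" using enum_carrier i j by auto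
  show "adj (opf regrep (card (carrier G)) f) $$ (i,j) = opf regrep (card (carrier G)) (\<lambda>h. cnj (f (inv h))) $$ (i,j)"
    using i j ei ej by (simp add: opf_reg_entry inv_mult_group)
qed auto

theorem completeness:
  assumes cf: "classf f" and orth: "\<forall>\<chi>\<in>irr_chars G. (\<Sum>h\<in>carrier G. f h * \<chi> h) = 0"
    and x: "x \<in> carrier G"
  shows "f x = 0"
proof -
  let ?N = "card (carrier G)"
  let ?R = "regrep"
  have R: "representation G ?N ?R" by (rule regrep_rep)
  let ?f' = "\<lambda>h. cnj (f (inv h))"
  define T where "T = opf ?R ?N f"
  define T' where "T' = opf ?R ?N ?f'"
  have T: "T \<in> carrier_mat ?N ?N" and T': "T' \<in> carrier_mat ?N ?N" unfolding T_def T'_def by auto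
  have adjT: "adj T = T'" unfolding T_def T'_def by (rule adj_opf_reg)
  define P where "P = T' * T"
  have Pc: "P \<in> carrier_mat ?N ?N" unfolding P_def using T T' by auto
  have cf': "classf ?f'" using classf_conj[OF cf] .
  have Pcomm: "?R k * P = P * ?R k" if k: "k \<in> carrier G" for k
  proof -
    have Rk: "?R k \<in> carrier_mat ?N ?N" using rep_carrier[OF R k] .
    have "?R k * P = (?R k * T') * T" unfolding P_def by (rule assoc_mult_mat[symmetric, OF Rk T' T])
    also have "?R k * T' = T' * ?R k" unfolding T'_def by (rule opf_comm[OF R cf' k])
    also have "T' * ?R k * T = T' * (?R k * T)" by (rule assoc_mult_mat[OF T' Rk T])
    also have "?R k * T = T * ?R k" unfolding T_def by (rule opf_comm[OF R cf k])
    also have "T' * (T * ?R k) = P * ?R k" unfolding P_def by (rule assoc_mult_mat[symmetric, OF T' T Rk])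
    finally show ?thesis .
  qed
  have ev0: "c = 0" if ev: "eigenvalue P c" for c
  proof (rule ccontr)
    assume c: "c \<noteq> 0"
    define E where "E = {v \<in> carrier_vec ?N. P *\<^sub>v v = c \<cdot>\<^sub>v v}"
    have Esub: "subspace_vec ?N E"
      unfolding subspace_vec_def
    proof (intro conjI ballI allI)
      show "E \<subseteq> carrier_vec ?N" unfolding E_def by auto
      show "0\<^sub>v ?N \<in> E" unfolding E_def using Pc by auto
      fix x y assume "x \<in> E" "y \<in> E"
      then show "x + y \<in> E" unfolding E_def using Pc
        by (auto simp: mult_add_distrib_mat_vec smult_add_distrib_vec)
    next
      fix d :: complex and x assume "x \<in> E"
      then show "d \<cdot>\<^sub>v x \<in> E" unfolding E_def using Pc
        by (auto simp: mult_mat_vec smult_smult_assoc mult.commute)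
    qed
    have Einv: "\<forall>h\<in>carrier G. \<forall>w\<in>E. ?R h *\<^sub>v w \<in> E"
    proof (intro ballI)
      fix h w assume h: "h \<in> carrier G" and w: "w \<in> E"
      have Rh: "?R h \<in> carrier_mat ?N ?N" using rep_carrier[OF R h] .
      have wc: "w \<in> carrier_vec ?N" and Pw: "P *\<^sub>v w = c \<cdot>\<^sub>v w" using w unfolding E_def by auto
      have "P *\<^sub>v (?R h *\<^sub>v w) = (P * ?R h) *\<^sub>v w" using Pc Rh wc by auto
      also have "\<dots> = (?R h * P) *\<^sub>v w" using Pcomm h by auto
      also have "\<dots> = ?R h *\<^sub>v (c \<cdot>\<^sub>v w)" using Pc Rh wc Pw by auto
      also have "\<dots> = c \<cdot>\<^sub>v (?R h *\<^sub>v w)" using Rh wc by (rule mult_mat_vec)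
      finally show "?R h *\<^sub>v w \<in> E" unfolding E_def using Rh wc by auto
    qed
    obtain v where v: "v \<in> carrier_vec ?N" "v \<noteq> 0\<^sub>v ?N" "P *\<^sub>v v = c \<cdot>\<^sub>v v"
      using ev Pc unfolding eigenvalue_def eigenvector_def by auto
    have "E \<noteq> {0\<^sub>v ?N}" using v unfolding E_def by auto
    from exists_irr_sub[OF R Esub this Einv]
    obtain m B \<rho> where m: "0 < m" and B: "B \<in> carrier_mat ?N m" and inj: "inj_mat B"
      and BE: "\<forall>x\<in>carrier_vec m. B *\<^sub>v x \<in> E" and irr: "irreducible_rep G m \<rho>"
      and inter: "\<forall>h\<in>carrier G. ?R h * B = B * \<rho> h" by blast
    have rep\<rho>: "representation G m \<rho>" using irr irr_rep by auto
    have "(\<lambda>g\<in>carrier G. mat_trace (\<rho> g)) \<in> irr_chars G" unfolding irr_chars_def using irr by blast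
    then have "(\<Sum>h\<in>carrier G. f h * (\<lambda>g\<in>carrier G. mat_trace (\<rho> g)) h) = 0" using orth by blast
    then have "(\<Sum>h\<in>carrier G. f h * mat_trace (\<rho> h)) = 0" by simp
    then have op0: "opf \<rho> m f = 0\<^sub>m m m" by (rule opf_irr_zero[OF irr cf])
    have "T * B = B * opf \<rho> m f" unfolding T_def by (rule opf_inter[OF R rep\<rho> B inter])
    also have "\<dots> = 0\<^sub>m ?N m" using op0 B by auto
    finally have TB: "T * B = 0\<^sub>m ?N m" .
    let ?u = "unit_vec m 0"
    have u: "?u \<in> carrier_vec m" by auto
    have Bu: "B *\<^sub>v ?u \<noteq> 0\<^sub>v ?N"
    proof
      assume "B *\<^sub>v ?u = 0\<^sub>v ?N"
      then have "?u = 0\<^sub>v m" using inj_matD[OF inj B u] by auto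
      then have "?u $ 0 = 0\<^sub>v m $ 0" by (rule arg_cong)
      then show False using m by simp
    qed
    have "P *\<^sub>v (B *\<^sub>v ?u) = T' *\<^sub>v ((T * B) *\<^sub>v ?u)" unfolding P_def using T T' B u by auto
    also have "\<dots> = 0\<^sub>v ?N" unfolding TB using T' u zero_mat_mult_vec_c[OF u] by auto
    finally have "P *\<^sub>v (B *\<^sub>v ?u) = 0\<^sub>v ?N" .
    moreover have "P *\<^sub>v (B *\<^sub>v ?u) = c \<cdot>\<^sub>v (B *\<^sub>v ?u)" using BE u unfolding E_def by auto
    ultimately have cB: "c \<cdot>\<^sub>v (B *\<^sub>v ?u) = 0\<^sub>v ?N" by simp
    have "B *\<^sub>v ?u = 0\<^sub>v ?N"
    proof (rule eq_vecI)
      fix i assume i: "i < dim_vec (0\<^sub>v ?N :: complex vec)"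
      then have "(c \<cdot>\<^sub>v (B *\<^sub>v ?u)) $ i = 0" using cB by simp
      then show "(B *\<^sub>v ?u) $ i = 0\<^sub>v ?N $ i" using c i B by simp
    qed (use B in auto)
    with Bu show False by auto
  qed
  have "P ^\<^sub>m ?N = 0\<^sub>m ?N ?N" by (rule nilp_of_spectrum[OF Pc ev0])
  moreover have "adj P = P"
  proof -
    have "adj T' = T" using adjT adj_adj by metis
    then show ?thesis unfolding P_def using adj_mult[OF T' T] adjT by simp
  qed
  ultimately have "P = 0\<^sub>m ?N ?N" using herm_nilp[OF Pc] by blast
  then have "adj T * T = 0\<^sub>m ?N ?N" unfolding P_def adjT .
  then have T0: "T = 0\<^sub>m ?N ?N" using adj_self_zero[OF T] by blast
  obtain i where i: "i < ?N" "enum i = x" using enum_surj[OF x] by auto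
  obtain j where j: "j < ?N" "enum j = \<one>" using enum_surj[of \<one>] by auto
  have "T $$ (i,j) = f x" unfolding T_def using opf_reg_entry[OF i(1) j(1)] i j x by simp
  then show ?thesis using T0 i j by simp
qed

end

context fgroup
begin

lemma card_pos: "0 < card (carrier G)"
  using fin by (auto simp: card_gt_0_iff)

lemma irr_chars_finite: "finite (irr_chars G)"
proof (rule ccontr)
  let ?N = "card (carrier G)"
  assume "infinite (irr_chars G)"
  then obtain S where S: "finite S" "card S = Suc ?N" "S \<subseteq> irr_chars G"
    using infinite_arbitrarily_large by blast
  obtain s where s: "bij_betw s {0..<Suc ?N} S" using ex_bij_betw_nat_finite[OF S(1)] S(2) by auto
  have sS: "j < Suc ?N \<Longrightarrow> s j \<in> irr_chars G" for j using s S(3) unfolding bij_betw_def by auto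
  have sinj: "j < Suc ?N \<Longrightarrow> l < Suc ?N \<Longrightarrow> s j = s l \<longleftrightarrow> j = l" for j l
    using s unfolding bij_betw_def inj_on_def by auto
  define M where "M = mat ?N (Suc ?N) (\<lambda>(i,j). s j (enum i))"
  have M: "M \<in> carrier_mat ?N (Suc ?N)" unfolding M_def by auto
  have "inj_mat M"
  proof (rule inj_matI[OF M])
    fix x :: "complex vec" assume x: "x \<in> carrier_vec (Suc ?N)" and Mx: "M *\<^sub>v x = 0\<^sub>v ?N"
    have row0: "(\<Sum>j<Suc ?N. x $ j * s j h) = 0" if h: "h \<in> carrier G" for h
    proof -
      obtain i where i: "i < ?N" "enum i = h" using enum_surj[OF h] by auto
      have "(M *\<^sub>v x) $ i = (\<Sum>j<Suc ?N. s j (enum i) * x $ j)"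
        using M x i by (auto simp: M_def scalar_prod_def atLeast0LessThan intro!: sum.cong)
      then show ?thesis using Mx i by (simp add: mult.commute)
    qed
    show "x = 0\<^sub>v (Suc ?N)"
    proof (rule eq_vecI)
      fix l assume "l < dim_vec (0\<^sub>v (Suc ?N) :: complex vec)"
      then have l: "l < Suc ?N" by auto
      have "0 = (\<Sum>h\<in>carrier G. (\<Sum>j<Suc ?N. x $ j * s j h) * s l (inv h))"
        using row0 by simp
      also have "\<dots> = (\<Sum>h\<in>carrier G. \<Sum>j<Suc ?N. x $ j * (s j h * s l (inv h)))"
        by (intro sum.cong refl) (simp only: sum_distrib_right mult.assoc)
      also have "\<dots> = (\<Sum>j<Suc ?N. \<Sum>h\<in>carrier G. x $ j * (s j h * s l (inv h)))"
        by (rule sum.swap)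
      also have "\<dots> = (\<Sum>j<Suc ?N. x $ j * (\<Sum>h\<in>carrier G. s j h * s l (inv h)))"
        by (simp only: sum_distrib_left)
      also have "\<dots> = (\<Sum>j<Suc ?N. x $ j * (if j = l then of_nat ?N else 0))"
        by (intro sum.cong refl) (use l sS sinj irr_chars_orth in auto)
      also have "\<dots> = x $ l * of_nat ?N" using l by (simp add: if_distrib[where f = "\<lambda>y. x $ _ * y"] cong: if_cong)
      finally have "x $ l * of_nat ?N = 0" by simp
      then show "x $ l = 0\<^sub>v (Suc ?N) $ l" using card_pos l by simp
    qed (use x in auto)
  qed
  from inj_mat_le[OF M this] show False by simp
qed

lemma char_classf:
  assumes "\<chi> \<in> irr_chars G"
  shows "classf \<chi>"
proof -
  obtain n \<rho> where irr: "irreducible_rep G n \<rho>" and chi: "\<chi> = (\<lambda>g\<in>carrier G. mat_trace (\<rho> g))"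
    using assms by (rule irr_charsE)
  have rep: "representation G n \<rho>" using irr irr_rep by auto
  show ?thesis unfolding classf_def
  proof (intro ballI)
    fix k u assume k: "k \<in> carrier G" and u: "u \<in> carrier G"
    have rk: "\<rho> k \<in> carrier_mat n n" and ru: "\<rho> u \<in> carrier_mat n n" and ri: "\<rho> (inv k) \<in> carrier_mat n n"
      using rep_carrier[OF rep] k u by auto
    have "mat_trace (\<rho> (k \<otimes> u \<otimes> inv k)) = mat_trace (\<rho> k * (\<rho> u * \<rho> (inv k)))"
      using rep_mult[OF rep] k u rk ru ri by simp
    also have "\<dots> = mat_trace ((\<rho> u * \<rho> (inv k)) * \<rho> k)"
      by (rule mat_trace_comm[OF rk]) (use ru ri in auto)
    also have "\<dots> = mat_trace (\<rho> u * (\<rho> (inv k) * \<rho> k))" using ru ri rk by simp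
    also have "\<dots> = mat_trace (\<rho> u)" using rep_inv_l[OF rep k] ru by simp
    finally show "\<chi> (k \<otimes> u \<otimes> inv k) = \<chi> u" using chi k u by simp
  qed
qed

lemma classf_diff: "classf f \<Longrightarrow> classf g \<Longrightarrow> classf (\<lambda>x. f x - g x)"
  unfolding classf_def by auto

lemma classf_sum: "finite A \<Longrightarrow> (\<And>a. a \<in> A \<Longrightarrow> classf (F a)) \<Longrightarrow> classf (\<lambda>x. (\<Sum>a\<in>A. c a * F a x) / d)"
  unfolding classf_def by (auto intro!: sum.cong)

lemma classf_inv: "classf f \<Longrightarrow> classf (\<lambda>x. f (inv x))"
  unfolding classf_def by (auto simp: inv_mult_group m_assoc)

theorem expansion:
  assumes cf: "classf f" and x: "x \<in> carrier G"
  shows "f x = (\<Sum>\<chi>\<in>irr_chars G. (\<Sum>h\<in>carrier G. f h * \<chi> (inv h)) * \<chi> x) / of_nat (card (carrier G))"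
proof -
  let ?X = "irr_chars G"
  let ?N = "card (carrier G)"
  define c where "c \<chi> = (\<Sum>h\<in>carrier G. f h * \<chi> (inv h))" for \<chi>
  define S where "S y = (\<Sum>\<chi>\<in>?X. c \<chi> * \<chi> y)" for y
  define g where "g y = f y - S y / of_nat ?N" for y
  have cg: "classf g" unfolding g_def S_def
    by (rule classf_diff[OF cf classf_sum[OF irr_chars_finite char_classf]])
  have cg': "classf (\<lambda>y. g (inv y))" by (rule classf_inv[OF cg])
  have orth: "\<forall>\<psi>\<in>?X. (\<Sum>h\<in>carrier G. g (inv h) * \<psi> h) = 0"
  proof
    fix \<psi> assume \<psi>: "\<psi> \<in> ?X"
    have "(\<Sum>h\<in>carrier G. g (inv h) * \<psi> h) = (\<Sum>h\<in>carrier G. g (inv (inv h)) * \<psi> (inv h))"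
      by (rule sum.reindex_bij_betw[OF inv_bij, symmetric])
    also have "\<dots> = (\<Sum>h\<in>carrier G. g h * \<psi> (inv h))" by (intro sum.cong refl) simp
    also have "\<dots> = (\<Sum>h\<in>carrier G. f h * \<psi> (inv h) - (S h * \<psi> (inv h)) / of_nat ?N)"
      by (intro sum.cong refl) (simp add: g_def left_diff_distrib)
    also have "\<dots> = c \<psi> - (\<Sum>h\<in>carrier G. S h * \<psi> (inv h)) / of_nat ?N"
      by (simp only: sum_subtractf sum_divide_distrib c_def)
    also have "(\<Sum>h\<in>carrier G. S h * \<psi> (inv h)) = (\<Sum>h\<in>carrier G. \<Sum>\<chi>\<in>?X. c \<chi> * (\<chi> h * \<psi> (inv h)))"
      unfolding S_def by (intro sum.cong refl) (simp only: sum_distrib_right mult.assoc)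
    also have "\<dots> = (\<Sum>\<chi>\<in>?X. \<Sum>h\<in>carrier G. c \<chi> * (\<chi> h * \<psi> (inv h)))" by (rule sum.swap)
    also have "\<dots> = (\<Sum>\<chi>\<in>?X. c \<chi> * (\<Sum>h\<in>carrier G. \<chi> h * \<psi> (inv h)))" by (simp only: sum_distrib_left)
    also have "\<dots> = (\<Sum>\<chi>\<in>?X. if \<chi> = \<psi> then c \<chi> * of_nat ?N else 0)"
      by (intro sum.cong refl) (use \<psi> irr_chars_orth in auto)
    also have "\<dots> = c \<psi> * of_nat ?N" using \<psi> irr_chars_finite by (simp add: sum.delta)
    finally show "(\<Sum>h\<in>carrier G. g (inv h) * \<psi> h) = 0" using card_pos by simp
  qed
  have "g (inv (inv x)) = 0" by (rule completeness[OF cg' orth]) (use x in auto)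
  then have "g x = 0" using x by simp
  then show ?thesis unfolding g_def S_def c_def by simp
qed

end

locale fgroup_cls = fgroup G for G (structure) +
  fixes I and g0
  assumes I_sub: "I \<subseteq> carrier G" and g0I: "g0 \<in> I"
    and I_conj: "\<And>k a. k \<in> carrier G \<Longrightarrow> a \<in> I \<Longrightarrow> k \<otimes> a \<otimes> inv k \<in> I"
    and I_inv: "\<And>a. a \<in> I \<Longrightarrow> inv a \<in> I"
    and I_all: "\<And>a. a \<in> I \<Longrightarrow> \<exists>k\<in>carrier G. a = k \<otimes> g0 \<otimes> inv k"
begin

lemma I_fin: "finite I" using fin I_sub finite_subset by blast

lemma I_carr: "a \<in> I \<Longrightarrow> a \<in> carrier G" using I_sub by auto

definition F :: "'a \<Rightarrow> complex" where
  "F x = of_nat (card {p \<in> I \<times> I. fst p \<otimes> snd p = x})"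

lemma F_classf: "classf F"
  unfolding classf_def
proof (intro ballI)
  fix k u assume k: "k \<in> carrier G" and u: "u \<in> carrier G"
  let ?A = "{p \<in> I \<times> I. fst p \<otimes> snd p = u}"
  let ?B = "{p \<in> I \<times> I. fst p \<otimes> snd p = k \<otimes> u \<otimes> inv k}"
  have "bij_betw (\<lambda>p. (k \<otimes> fst p \<otimes> inv k, k \<otimes> snd p \<otimes> inv k)) ?A ?B"
  proof (rule bij_betw_byWitness[where f' = "\<lambda>p. (inv k \<otimes> fst p \<otimes> k, inv k \<otimes> snd p \<otimes> k)"])
    show "\<forall>a\<in>?A. (inv k \<otimes> fst (k \<otimes> fst a \<otimes> inv k, k \<otimes> snd a \<otimes> inv k) \<otimes> k,
                  inv k \<otimes> snd (k \<otimes> fst a \<otimes> inv k, k \<otimes> snd a \<otimes> inv k) \<otimes> k) = a"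
    proof
      fix p assume "p \<in> ?A"
      then have c: "fst p \<in> carrier G" "snd p \<in> carrier G" using I_carr by auto
      show "(inv k \<otimes> fst (k \<otimes> fst p \<otimes> inv k, k \<otimes> snd p \<otimes> inv k) \<otimes> k,
                  inv k \<otimes> snd (k \<otimes> fst p \<otimes> inv k, k \<otimes> snd p \<otimes> inv k) \<otimes> k) = p"
        using k c by (simp add: m_assoc cancel1 cancel2)
    qed
    show "\<forall>a\<in>?B. (k \<otimes> fst (inv k \<otimes> fst a \<otimes> k, inv k \<otimes> snd a \<otimes> k) \<otimes> inv k,
                  k \<otimes> snd (inv k \<otimes> fst a \<otimes> k, inv k \<otimes> snd a \<otimes> k) \<otimes> inv k) = a"
    proof
      fix p assume "p \<in> ?B"
      then have c: "fst p \<in> carrier G" "snd p \<in> carrier G" using I_carr by auto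
      show "(k \<otimes> fst (inv k \<otimes> fst p \<otimes> k, inv k \<otimes> snd p \<otimes> k) \<otimes> inv k,
                  k \<otimes> snd (inv k \<otimes> fst p \<otimes> k, inv k \<otimes> snd p \<otimes> k) \<otimes> inv k) = p"
        using k c by (simp add: m_assoc cancel1 cancel2)
    qed
    show "(\<lambda>p. (k \<otimes> fst p \<otimes> inv k, k \<otimes> snd p \<otimes> inv k)) ` ?A \<subseteq> ?B"
      using k I_carr I_conj by (auto simp: m_assoc cancel1 cancel2)
    show "(\<lambda>p. (inv k \<otimes> fst p \<otimes> k, inv k \<otimes> snd p \<otimes> k)) ` ?B \<subseteq> ?A"
    proof
      fix q assume "q \<in> (\<lambda>p. (inv k \<otimes> fst p \<otimes> k, inv k \<otimes> snd p \<otimes> k)) ` ?B"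
      then obtain a b where ab: "a \<in> I" "b \<in> I" "a \<otimes> b = k \<otimes> u \<otimes> inv k" and q: "q = (inv k \<otimes> a \<otimes> k, inv k \<otimes> b \<otimes> k)"
        by auto
      have "inv k \<otimes> a \<otimes> inv (inv k) \<in> I" "inv k \<otimes> b \<otimes> inv (inv k) \<in> I"
        using I_conj[of "inv k" a] I_conj[of "inv k" b] k ab by auto
      then have i1: "inv k \<otimes> a \<otimes> k \<in> I" "inv k \<otimes> b \<otimes> k \<in> I" using k by auto
      have "(inv k \<otimes> a \<otimes> k) \<otimes> (inv k \<otimes> b \<otimes> k) = inv k \<otimes> (a \<otimes> b) \<otimes> k"
        using k ab(1,2) I_carr by (simp add: m_assoc cancel1 cancel2)
      also have "\<dots> = inv k \<otimes> (k \<otimes> u \<otimes> inv k) \<otimes> k" by (simp only: ab(3))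
      also have "\<dots> = u" using k u by (simp add: m_assoc cancel1 cancel2)
      finally show "q \<in> ?A" using q i1 by auto
    qed
  qed
  from bij_betw_same_card[OF this] show "F (k \<otimes> u \<otimes> inv k) = F u" unfolding F_def by simp
qed

lemma F_sum: "F h = (\<Sum>p\<in>I \<times> I. if fst p \<otimes> snd p = h then 1 else 0)"
proof -
  have "finite (I \<times> I)" using I_fin by auto
  then show ?thesis unfolding F_def using sum.inter_filter[of "I \<times> I" "\<lambda>_. (1::complex)" "\<lambda>p. fst p \<otimes> snd p = h"]
    by simp
qed

lemma swap_bij: "bij_betw (\<lambda>p. (inv (snd p), inv (fst p))) (I \<times> I) (I \<times> I)"
  by (rule bij_betw_byWitness[where f' = "\<lambda>p. (inv (snd p), inv (fst p))"]) (auto simp: I_inv I_carr)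

lemma F_coef:
  assumes chi: "\<chi> \<in> irr_chars G"
  shows "(\<Sum>h\<in>carrier G. F h * \<chi> (inv h)) = (\<Sum>p\<in>I \<times> I. \<chi> (fst p \<otimes> snd p))"
proof -
  have fI: "finite (I \<times> I)" using I_fin by auto
  have "(\<Sum>h\<in>carrier G. F h * \<chi> (inv h)) = (\<Sum>h\<in>carrier G. \<Sum>p\<in>I \<times> I. if fst p \<otimes> snd p = h then \<chi> (inv h) else 0)"
    unfolding F_sum by (intro sum.cong refl) (simp add: sum_distrib_right if_distrib[where f = "\<lambda>y. y * _"] cong: if_cong)
  also have "\<dots> = (\<Sum>p\<in>I \<times> I. \<Sum>h\<in>carrier G. if h = fst p \<otimes> snd p then \<chi> (inv h) else 0)"
    by (subst sum.swap) (intro sum.cong refl, auto)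
  also have "\<dots> = (\<Sum>p\<in>I \<times> I. \<chi> (inv (fst p \<otimes> snd p)))"
    by (intro sum.cong refl) (use fin I_carr in \<open>auto simp: sum.delta\<close>)
  also have "\<dots> = (\<Sum>p\<in>I \<times> I. \<chi> (fst (inv (snd p), inv (fst p)) \<otimes> snd (inv (snd p), inv (fst p))))"
    by (intro sum.cong refl) (use I_carr in \<open>auto simp: inv_mult_group\<close>)
  also have "\<dots> = (\<Sum>p\<in>I \<times> I. \<chi> (fst p \<otimes> snd p))"
    by (rule sum.reindex_bij_betw[OF swap_bij])
  finally show ?thesis .
qed

lemma irr_char_rep:
  assumes chi: "\<chi> \<in> irr_chars G"
  obtains n \<rho> where "irreducible_rep G n \<rho>" "\<And>x. x \<in> carrier G \<Longrightarrow> \<chi> x = mat_trace (\<rho> x)"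
  using irr_charsE[OF chi] by (metis restrict_apply)

lemma char_one:
  assumes chi: "\<chi> \<in> irr_chars G"
  shows "\<exists>n>0. \<chi> \<one> = of_nat n"
proof -
  obtain n \<rho> where irr: "irreducible_rep G n \<rho>" and c: "\<And>x. x \<in> carrier G \<Longrightarrow> \<chi> x = mat_trace (\<rho> x)"
    using irr_char_rep[OF chi] by blast
  have "\<chi> \<one> = of_nat n" using c[of \<one>] rep_one[OF irr_rep[OF irr]] by simp
  then show ?thesis using irr_pos[OF irr] by blast
qed

lemma char_triple:
  assumes chi: "\<chi> \<in> irr_chars G"
  shows "(\<Sum>p\<in>I \<times> I. \<chi> (fst p \<otimes> snd p)) * \<chi> \<one> = (of_nat (card I) * \<chi> g0)\<^sup>2"
proof -
  obtain n \<rho> where irr: "irreducible_rep G n \<rho>" and c: "\<And>x. x \<in> carrier G \<Longrightarrow> \<chi> x = mat_trace (\<rho> x)"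
    using irr_char_rep[OF chi] by blast
  have rep: "representation G n \<rho>" using irr_rep[OF irr] .
  have cf: "classf \<chi>" using char_classf[OF chi] .
  define K where "K = msum \<rho> I n n"
  have K: "K \<in> carrier_mat n n" unfolding K_def by simp
  have rI: "a \<in> I \<Longrightarrow> \<rho> a \<in> carrier_mat n n" for a using rep_carrier[OF rep] I_carr by auto
  have comm: "\<forall>k\<in>carrier G. \<rho> k * K = K * \<rho> k"
  proof
    fix k assume k: "k \<in> carrier G"
    have rk: "\<rho> k \<in> carrier_mat n n" using rep_carrier[OF rep k] .
    have cb: "bij_betw (\<lambda>a. k \<otimes> a \<otimes> inv k) I I"
    proof (rule bij_betw_byWitness[where f' = "\<lambda>a. inv k \<otimes> a \<otimes> k"])
      show "\<forall>a\<in>I. inv k \<otimes> (k \<otimes> a \<otimes> inv k) \<otimes> k = a" using k I_carr by (simp add: m_assoc cancel1 cancel2)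
      show "\<forall>a\<in>I. k \<otimes> (inv k \<otimes> a \<otimes> k) \<otimes> inv k = a" using k I_carr by (simp add: m_assoc cancel1 cancel2)
      show "(\<lambda>a. k \<otimes> a \<otimes> inv k) ` I \<subseteq> I" using I_conj k by auto
      show "(\<lambda>a. inv k \<otimes> a \<otimes> k) ` I \<subseteq> I" using I_conj[of "inv k"] k by auto
    qed
    have "\<rho> k * K = msum (\<lambda>a. \<rho> k * \<rho> a) I n n" unfolding K_def by (rule mult_msum_left[OF rk rI])
    also have "\<dots> = msum (\<lambda>a. \<rho> (k \<otimes> a)) I n n" by (rule msum_cong) (use rep_mult[OF rep] k I_carr in auto)
    also have "\<dots> = msum (\<lambda>a. \<rho> ((k \<otimes> a \<otimes> inv k) \<otimes> k)) I n n"
      by (rule msum_cong) (use k I_carr in \<open>simp add: m_assoc\<close>)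
    also have "\<dots> = msum (\<lambda>a. \<rho> (a \<otimes> k)) I n n" by (rule msum_reindex[OF cb, symmetric])
    also have "\<dots> = msum (\<lambda>a. \<rho> a * \<rho> k) I n n" by (rule msum_cong) (use rep_mult[OF rep] k I_carr in auto)
    also have "\<dots> = K * \<rho> k" unfolding K_def by (rule mult_msum_right[OF rk rI, symmetric])
    finally show "\<rho> k * K = K * \<rho> k" .
  qed
  obtain lm where lam: "K = lm \<cdot>\<^sub>m 1\<^sub>m n" using schur_scalar[OF irr K comm] by blast
  have "mat_trace K = (\<Sum>a\<in>I. mat_trace (\<rho> a))" unfolding K_def by (rule msum_trace[OF rI])
  also have "\<dots> = (\<Sum>a\<in>I. \<chi> g0)"
  proof (rule sum.cong[OF refl])
    fix a assume a: "a \<in> I"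
    obtain k where k: "k \<in> carrier G" "a = k \<otimes> g0 \<otimes> inv k" using I_all[OF a] by blast
    have "\<chi> a = \<chi> g0" using cf k g0I I_carr unfolding classf_def by auto
    then show "mat_trace (\<rho> a) = \<chi> g0" using c[of a] a I_carr by auto
  qed
  also have "\<dots> = of_nat (card I) * \<chi> g0" by simp
  finally have trK: "lm * of_nat n = of_nat (card I) * \<chi> g0"
    using lam mat_trace_smult[of "1\<^sub>m n" n lm] by simp
  have "(\<Sum>p\<in>I \<times> I. \<chi> (fst p \<otimes> snd p)) = (\<Sum>(a,b)\<in>I \<times> I. mat_trace (\<rho> a * \<rho> b))"
  proof (rule sum.cong[OF refl])
    fix p assume p: "p \<in> I \<times> I"
    obtain a b where ab: "p = (a,b)" by (cases p)
    then have a: "a \<in> carrier G" and b: "b \<in> carrier G" using p I_carr by auto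
    show "\<chi> (fst p \<otimes> snd p) = (case p of (a,b) \<Rightarrow> mat_trace (\<rho> a * \<rho> b))"
      using c[of "a \<otimes> b"] rep_mult[OF rep a b] a b ab by simp
  qed
  also have "\<dots> = (\<Sum>a\<in>I. \<Sum>b\<in>I. mat_trace (\<rho> a * \<rho> b))"
    by (rule sum.cartesian_product[symmetric])
  also have "\<dots> = (\<Sum>a\<in>I. mat_trace (\<rho> a * K))"
  proof (rule sum.cong[OF refl])
    fix a assume a: "a \<in> I"
    have "\<rho> a * K = msum (\<lambda>b. \<rho> a * \<rho> b) I n n" unfolding K_def by (rule mult_msum_left[OF rI[OF a] rI])
    moreover have "mat_trace (msum (\<lambda>b. \<rho> a * \<rho> b) I n n) = (\<Sum>b\<in>I. mat_trace (\<rho> a * \<rho> b))"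
      by (rule msum_trace) (use rI a in \<open>auto intro!: mult_carrier_mat\<close>)
    ultimately show "(\<Sum>b\<in>I. mat_trace (\<rho> a * \<rho> b)) = mat_trace (\<rho> a * K)" by simp
  qed
  also have "\<dots> = mat_trace (K * K)"
  proof -
    have "K * K = msum (\<lambda>a. \<rho> a * K) I n n" unfolding K_def by (rule mult_msum_right[OF msum_carrier rI])
    moreover have "mat_trace (msum (\<lambda>a. \<rho> a * K) I n n) = (\<Sum>a\<in>I. mat_trace (\<rho> a * K))"
      by (rule msum_trace) (use rI K in \<open>auto intro!: mult_carrier_mat\<close>)
    ultimately show ?thesis by simp
  qed
  also have "\<dots> = lm * lm * of_nat n" using lam by (simp add: mat_trace_def)
  finally have e: "(\<Sum>p\<in>I \<times> I. \<chi> (fst p \<otimes> snd p)) = lm * lm * of_nat n" .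
  have one: "\<chi> \<one> = of_nat n" using c[of \<one>] rep_one[OF rep] by simp
  show ?thesis unfolding e one using trK[symmetric] by (simp add: power2_eq_square algebra_simps)
qed

theorem F_formula:
  "F g0 * of_nat (card (carrier G)) = (of_nat (card I))\<^sup>2 * (\<Sum>\<chi>\<in>irr_chars G. \<chi> g0 ^ 3 / \<chi> \<one>)"
proof -
  have g0: "g0 \<in> carrier G" using g0I I_carr by auto
  have "F g0 = (\<Sum>\<chi>\<in>irr_chars G. (\<Sum>h\<in>carrier G. F h * \<chi> (inv h)) * \<chi> g0) / of_nat (card (carrier G))"
    by (rule expansion[OF F_classf g0])
  also have "(\<Sum>\<chi>\<in>irr_chars G. (\<Sum>h\<in>carrier G. F h * \<chi> (inv h)) * \<chi> g0)
      = (\<Sum>\<chi>\<in>irr_chars G. (of_nat (card I))\<^sup>2 * (\<chi> g0 ^ 3 / \<chi> \<one>))"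
  proof (rule sum.cong[OF refl])
    fix \<chi> assume chi: "\<chi> \<in> irr_chars G"
    obtain n where n: "0 < n" "\<chi> \<one> = of_nat n" using char_one[OF chi] by blast
    have "(\<Sum>h\<in>carrier G. F h * \<chi> (inv h)) = (of_nat (card I) * \<chi> g0)\<^sup>2 / \<chi> \<one>"
      using char_triple[OF chi] F_coef[OF chi] n by (simp add: field_simps)
    then show "(\<Sum>h\<in>carrier G. F h * \<chi> (inv h)) * \<chi> g0 = (of_nat (card I))\<^sup>2 * (\<chi> g0 ^ 3 / \<chi> \<one>)"
      by (simp add: power2_eq_square power3_eq_cube field_simps)
  qed
  also have "\<dots> = (of_nat (card I))\<^sup>2 * (\<Sum>\<chi>\<in>irr_chars G. \<chi> g0 ^ 3 / \<chi> \<one>)"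
    by (simp add: sum_distrib_left)
  finally show ?thesis using card_pos by (simp add: field_simps)
qed

end

context fgroup_cls
begin

lemma triple_solution:
  assumes x: "x \<in> carrier G" and y: "y \<in> carrier G" and z: "z \<in> carrier G"
    and xy: "inv x \<otimes> y \<in> I" and yz: "inv y \<otimes> z \<in> I" and xz: "inv x \<otimes> z \<in> I"
  shows "\<exists>a\<in>I. \<exists>b\<in>I. a \<otimes> b = g0"
proof -
  have g0: "g0 \<in> carrier G" using g0I I_carr by auto
  obtain k where k: "k \<in> carrier G" and c: "inv x \<otimes> z = k \<otimes> g0 \<otimes> inv k" using I_all[OF xz] by blast
  let ?a = "inv k \<otimes> (inv x \<otimes> y) \<otimes> k"
  let ?b = "inv k \<otimes> (inv y \<otimes> z) \<otimes> k"
  have a: "?a \<in> I" using I_conj[of "inv k" "inv x \<otimes> y"] k xy by simp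
  have b: "?b \<in> I" using I_conj[of "inv k" "inv y \<otimes> z"] k yz by simp
  have "?a \<otimes> ?b = inv k \<otimes> (inv x \<otimes> z) \<otimes> k"
    using x y z k by (simp add: m_assoc cancel1 cancel2)
  also have "\<dots> = inv k \<otimes> (k \<otimes> g0 \<otimes> inv k) \<otimes> k" by (simp only: c)
  also have "\<dots> = g0" using k g0 by (simp add: m_assoc cancel1 cancel2)
  finally show ?thesis using a b by blast
qed

end

lemma card_ge3:
  assumes "finite F" "3 \<le> card F"
  shows "\<exists>x\<in>F. \<exists>y\<in>F. \<exists>z\<in>F. x \<noteq> y \<and> y \<noteq> z \<and> x \<noteq> z"
proof -
  from assms(2) obtain x B where B: "F = insert x B" "x \<notin> B" "2 \<le> card B" "finite B"
    using card_le_Suc_iff[of 2 F] by (auto simp: numeral_3_eq_3)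
  from B(3) obtain y C where C: "B = insert y C" "y \<notin> C" "1 \<le> card C" "finite C"
    using card_le_Suc_iff[of 1 B] by (auto simp: numeral_2_eq_2)
  from C(3) obtain z D where D: "C = insert z D" "z \<notin> D"
    using card_le_Suc_iff[of 0 C] by auto
  show ?thesis using B C D by (intro bexI[of _ x] bexI[of _ y] bexI[of _ z]) auto
qed


theorem proposition3p4:
  fixes V :: "'a set" and G :: "('a \<Rightarrow> 'a) set" and g :: "'a \<Rightarrow> 'a" and v :: 'a
  defines "H \<equiv> (BijGroup V)\<lparr>carrier := G\<rparr>"
  assumes "perm_group V G"
    and "V \<noteq> {}"
    and "transitive_on V G"
    and "\<forall>w\<in>V. card (stabilizer V G w) = 2"
    and "g \<in> G" and "g \<noteq> \<one>\<^bsub>H\<^esub>" and "v \<in> V" and "g v = v"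
  shows "EKR V G \<longleftrightarrow> (\<Sum>\<chi>\<in>irr_chars H. \<chi> g ^ 3 / \<chi> \<one>\<^bsub>H\<^esub>) = 0"
proof -
  note pg = assms(2) and Vne = assms(3) and tr = assms(4) and st2 = assms(5)
    and gG = assms(6) and g1 = assms(7) and vV = assms(8) and gv = assms(9)
  have finV: "finite V" and sub: "subgroup G (BijGroup V)" using pg unfolding perm_group_def by auto
  have grpH: "group H" unfolding H_def by (rule group.subgroup_imp_group[OF group_BijGroup sub])
  have carrH: "carrier H = G" unfolding H_def by simp
  have GBij: "G \<subseteq> Bij V" using subgroup.subset[OF sub] by (simp add: BijGroup_def)
  have finG: "finite G"
  proof (rule finite_subset)
    show "G \<subseteq> PiE V (\<lambda>_. V)" using GBij unfolding Bij_def
      by (auto simp: bij_betw_def PiE_def Pi_def)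
    show "finite (PiE V (\<lambda>_. V))" using finV by (simp add: finite_PiE)
  qed
  have multH: "x \<otimes>\<^bsub>H\<^esub> y = compose V x y" if "x \<in> G" "y \<in> G" for x y
    using that GBij unfolding H_def BijGroup_def by auto
  have oneH: "\<one>\<^bsub>H\<^esub> = (\<lambda>x\<in>V. x)" unfolding H_def BijGroup_def by simp
  have ev_mult: "(x \<otimes>\<^bsub>H\<^esub> y) w = x (y w)" if "x \<in> G" "y \<in> G" "w \<in> V" for x y w
    using multH[OF that(1,2)] that(3) by (simp add: compose_def)
  have ev_one: "\<one>\<^bsub>H\<^esub> w = w" if "w \<in> V" for w using that oneH by simp
  have mapsV: "x w \<in> V" if "x \<in> G" "w \<in> V" for x w
    using that GBij Bij_imp_funcset by blast
  interpret H: fgroup H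
    by (rule fgroup.intro[OF grpH]) (unfold_locales, simp add: carrH finG)
  have invG: "inv\<^bsub>H\<^esub> x \<in> G" if "x \<in> G" for x using H.inv_closed that carrH by auto
  have multG: "x \<otimes>\<^bsub>H\<^esub> y \<in> G" if "x \<in> G" "y \<in> G" for x y using H.m_closed that carrH by auto
  have oneG: "\<one>\<^bsub>H\<^esub> \<in> G" using H.one_closed carrH by auto
  have ev_inv: "(inv\<^bsub>H\<^esub> x) (x w) = w" if "x \<in> G" "w \<in> V" for x w
  proof -
    have "(inv\<^bsub>H\<^esub> x) (x w) = (inv\<^bsub>H\<^esub> x \<otimes>\<^bsub>H\<^esub> x) w" using ev_mult[OF invG[OF that(1)] that(1) that(2)] by simp
    also have "inv\<^bsub>H\<^esub> x \<otimes>\<^bsub>H\<^esub> x = \<one>\<^bsub>H\<^esub>" using H.l_inv that(1) carrH by auto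
    finally show ?thesis using ev_one that(2) by simp
  qed
  define I where "I = {a \<in> G. a \<noteq> \<one>\<^bsub>H\<^esub> \<and> (\<exists>w\<in>V. a w = w)}"
  have stab_eq: "a = b" if "a \<in> G" "b \<in> G" "a \<noteq> \<one>\<^bsub>H\<^esub>" "b \<noteq> \<one>\<^bsub>H\<^esub>" "w \<in> V" "a w = w" "b w = w" for a b w
  proof (rule ccontr)
    assume ab: "a \<noteq> b"
    have sub3: "{\<one>\<^bsub>H\<^esub>, a, b} \<subseteq> stabilizer V G w"
      unfolding stabilizer_def using that oneG ev_one by auto
    have "finite (stabilizer V G w)" using finG unfolding stabilizer_def by auto
    then have "card {\<one>\<^bsub>H\<^esub>, a, b} \<le> card (stabilizer V G w)" using sub3 by (rule card_mono)
    moreover have "card {\<one>\<^bsub>H\<^esub>, a, b} = 3" using that ab by auto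
    ultimately show False using st2 that(5) by auto
  qed
  have conj_fix: "(k \<otimes>\<^bsub>H\<^esub> a \<otimes>\<^bsub>H\<^esub> inv\<^bsub>H\<^esub> k) (k w) = k w" if "k \<in> G" "a \<in> G" "w \<in> V" "a w = w" for k a w
  proof -
    have kw: "k w \<in> V" using mapsV that by auto
    have "(k \<otimes>\<^bsub>H\<^esub> a \<otimes>\<^bsub>H\<^esub> inv\<^bsub>H\<^esub> k) (k w) = (k \<otimes>\<^bsub>H\<^esub> a) ((inv\<^bsub>H\<^esub> k) (k w))"
      using ev_mult[OF multG[OF that(1,2)] invG[OF that(1)] kw] .
    also have "\<dots> = k w" using ev_inv[OF that(1,3)] ev_mult[OF that(1,2,3)] that(4) by simp
    finally show ?thesis .
  qed
  interpret C: fgroup_cls H I g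
  proof (rule fgroup_cls.intro[OF H.fgroup_axioms], unfold_locales)
    show "I \<subseteq> carrier H" unfolding I_def carrH by auto
    show "g \<in> I" unfolding I_def using gG g1 vV gv by auto
  next
    fix k a assume k: "k \<in> carrier H" and a: "a \<in> I"
    then have kG: "k \<in> G" and aG: "a \<in> G" and a1: "a \<noteq> \<one>\<^bsub>H\<^esub>" and "\<exists>w\<in>V. a w = w" using carrH I_def by auto
    then obtain w where w: "w \<in> V" "a w = w" by auto
    have "k \<otimes>\<^bsub>H\<^esub> a \<otimes>\<^bsub>H\<^esub> inv\<^bsub>H\<^esub> k \<noteq> \<one>\<^bsub>H\<^esub>"
    proof
      assume "k \<otimes>\<^bsub>H\<^esub> a \<otimes>\<^bsub>H\<^esub> inv\<^bsub>H\<^esub> k = \<one>\<^bsub>H\<^esub>"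
      then have "a = inv\<^bsub>H\<^esub> k \<otimes>\<^bsub>H\<^esub> \<one>\<^bsub>H\<^esub> \<otimes>\<^bsub>H\<^esub> k"
        using k aG carrH by (metis H.cancel1 H.inv_closed H.inv_inv H.m_assoc H.m_closed H.r_one H.r_inv)
      then have "a = \<one>\<^bsub>H\<^esub>" using k by simp
      with a1 show False by simp
    qed
    then show "k \<otimes>\<^bsub>H\<^esub> a \<otimes>\<^bsub>H\<^esub> inv\<^bsub>H\<^esub> k \<in> I" unfolding I_def
      using multG[OF multG[OF kG aG] invG[OF kG]] conj_fix[OF kG aG w] mapsV[OF kG w(1)] by auto
  next
    fix a assume a: "a \<in> I"
    then have aG: "a \<in> G" and a1: "a \<noteq> \<one>\<^bsub>H\<^esub>" and "\<exists>w\<in>V. a w = w" using I_def by auto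
    then obtain w where w: "w \<in> V" "a w = w" by auto
    have "(inv\<^bsub>H\<^esub> a) w = w" using ev_inv[OF aG w(1)] w(2) by simp
    moreover have "inv\<^bsub>H\<^esub> a \<noteq> \<one>\<^bsub>H\<^esub>" using a1 aG carrH by (metis H.inv_inv H.inv_one)
    ultimately show "inv\<^bsub>H\<^esub> a \<in> I" unfolding I_def using invG[OF aG] w by auto
  next
    fix a assume a: "a \<in> I"
    then have aG: "a \<in> G" and a1: "a \<noteq> \<one>\<^bsub>H\<^esub>" and "\<exists>w\<in>V. a w = w" using I_def by auto
    then obtain w where w: "w \<in> V" "a w = w" by auto
    obtain k where k: "k \<in> G" "k v = w" using tr vV w(1) unfolding transitive_on_def by blast
    let ?b = "k \<otimes>\<^bsub>H\<^esub> g \<otimes>\<^bsub>H\<^esub> inv\<^bsub>H\<^esub> k"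
    have bG: "?b \<in> G" using multG[OF multG[OF k(1) gG] invG[OF k(1)]] .
    have bw: "?b w = w" using conj_fix[OF k(1) gG vV gv] k(2) by simp
    have b1: "?b \<noteq> \<one>\<^bsub>H\<^esub>"
    proof
      assume "?b = \<one>\<^bsub>H\<^esub>"
      then have "g = inv\<^bsub>H\<^esub> k \<otimes>\<^bsub>H\<^esub> \<one>\<^bsub>H\<^esub> \<otimes>\<^bsub>H\<^esub> k"
        using k gG carrH by (metis H.cancel1 H.inv_closed H.inv_inv H.m_assoc H.m_closed H.r_one H.r_inv)
      moreover have "k \<in> carrier H" using k(1) carrH by simp
      ultimately have "g = \<one>\<^bsub>H\<^esub>" by simp
      with g1 show False by simp
    qed
    have "a = ?b" using stab_eq[OF aG bG a1 b1 w(1) w(2) bw] .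
    then show "\<exists>k\<in>carrier H. a = k \<otimes>\<^bsub>H\<^esub> g \<otimes>\<^bsub>H\<^esub> inv\<^bsub>H\<^esub> k" using k carrH by auto
  qed
  \<comment> \<open>The character sum versus the number of solutions\<close>
  have IsubG: "I \<subseteq> G" unfolding I_def by auto
  have finI: "finite I" using finG IsubG finite_subset by blast
  have cardI: "0 < card I" using finI C.g0I by (auto simp: card_gt_0_iff)
  have cardG: "0 < card G" using finG gG by (auto simp: card_gt_0_iff)
  have formula: "C.F g * of_nat (card G) = (of_nat (card I))\<^sup>2 * (\<Sum>\<chi>\<in>irr_chars H. \<chi> g ^ 3 / \<chi> \<one>\<^bsub>H\<^esub>)"
    using C.F_formula carrH by simp
  have sum_iff: "(\<Sum>\<chi>\<in>irr_chars H. \<chi> g ^ 3 / \<chi> \<one>\<^bsub>H\<^esub>) = 0 \<longleftrightarrow> \<not> (\<exists>a\<in>I. \<exists>b\<in>I. a \<otimes>\<^bsub>H\<^esub> b = g)"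
  proof -
    have nzG: "of_nat (card G) \<noteq> (0::complex)" using cardG by simp
    have nzI: "(of_nat (card I))\<^sup>2 \<noteq> (0::complex)" using cardI by simp
    have "(\<Sum>\<chi>\<in>irr_chars H. \<chi> g ^ 3 / \<chi> \<one>\<^bsub>H\<^esub>) = 0 \<longleftrightarrow> C.F g = 0"
    proof
      assume "(\<Sum>\<chi>\<in>irr_chars H. \<chi> g ^ 3 / \<chi> \<one>\<^bsub>H\<^esub>) = 0"
      then have "C.F g * of_nat (card G) = 0" using formula by simp
      then show "C.F g = 0" using nzG by simp
    next
      assume "C.F g = 0"
      then have "(of_nat (card I))\<^sup>2 * (\<Sum>\<chi>\<in>irr_chars H. \<chi> g ^ 3 / \<chi> \<one>\<^bsub>H\<^esub>) = 0"
        using formula by simp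
      then show "(\<Sum>\<chi>\<in>irr_chars H. \<chi> g ^ 3 / \<chi> \<one>\<^bsub>H\<^esub>) = 0" using nzI by simp
    qed
    also have "C.F g = 0 \<longleftrightarrow> card {p \<in> I \<times> I. fst p \<otimes>\<^bsub>H\<^esub> snd p = g} = 0"
      unfolding C.F_def by simp
    also have "\<dots> \<longleftrightarrow> {p \<in> I \<times> I. fst p \<otimes>\<^bsub>H\<^esub> snd p = g} = {}"
      using finI by simp
    also have "\<dots> \<longleftrightarrow> \<not> (\<exists>a\<in>I. \<exists>b\<in>I. a \<otimes>\<^bsub>H\<^esub> b = g)" by auto
    finally show ?thesis .
  qed
  define M where "M = {card F | F. F \<subseteq> G \<and> intersecting V F}"
  have finM: "finite M"
  proof -
    have "M \<subseteq> card ` Pow G" unfolding M_def by auto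
    then show ?thesis using finG finite_subset by blast
  qed
  have rhs: "Max ((\<lambda>v. card (stabilizer V G v)) ` V) = 2"
  proof -
    have "(\<lambda>v. card (stabilizer V G v)) ` V = {2}" using st2 Vne by auto
    then show ?thesis by simp
  qed
  have stab_int: "stabilizer V G v \<subseteq> G \<and> intersecting V (stabilizer V G v)"
    unfolding stabilizer_def intersecting_def using vV by (auto intro!: bexI[where x = v])
  have twoM: "2 \<in> M"
  proof -
    have "card (stabilizer V G v) = 2" using st2 vV by blast
    then show ?thesis unfolding M_def using stab_int by (intro CollectI exI[of _ "stabilizer V G v"]) simp
  qed
  have "EKR V G \<longleftrightarrow> Max M = 2" unfolding EKR_def M_def[symmetric] rhs ..
  also have "\<dots> \<longleftrightarrow> \<not> (\<exists>a\<in>I. \<exists>b\<in>I. a \<otimes>\<^bsub>H\<^esub> b = g)"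
  proof
    assume max2: "Max M = 2"
    show "\<not> (\<exists>a\<in>I. \<exists>b\<in>I. a \<otimes>\<^bsub>H\<^esub> b = g)"
    proof
      assume "\<exists>a\<in>I. \<exists>b\<in>I. a \<otimes>\<^bsub>H\<^esub> b = g"
      then obtain a b where a: "a \<in> I" and b: "b \<in> I" and ab: "a \<otimes>\<^bsub>H\<^esub> b = g" by auto
      have aG: "a \<in> G" and a1: "a \<noteq> \<one>\<^bsub>H\<^esub>" and "\<exists>w\<in>V. a w = w" using a I_def by auto
      then obtain w where w: "w \<in> V" "a w = w" by auto
      have bG: "b \<in> G" and b1: "b \<noteq> \<one>\<^bsub>H\<^esub>" and "\<exists>u\<in>V. b u = u" using b I_def by auto
      then obtain u where u: "u \<in> V" "b u = u" by auto
      have ag: "a \<noteq> g"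
      proof
        assume "a = g"
        then have "a \<otimes>\<^bsub>H\<^esub> b = a" using ab by simp
        moreover have "a \<in> carrier H" "b \<in> carrier H" using aG bG carrH by auto
        ultimately have "b = \<one>\<^bsub>H\<^esub>" using H.l_cancel_one by blast
        with b1 show False by simp
      qed
      have int: "intersecting V {\<one>\<^bsub>H\<^esub>, a, g}"
        unfolding intersecting_def
      proof (intro ballI)
        fix x y assume x: "x \<in> {\<one>\<^bsub>H\<^esub>, a, g}" and y: "y \<in> {\<one>\<^bsub>H\<^esub>, a, g}"
        have e1a: "\<one>\<^bsub>H\<^esub> w = a w" using ev_one w by simp
        have e1g: "\<one>\<^bsub>H\<^esub> v = g v" using ev_one vV gv by simp
        have eag: "a u = g u" using ev_mult[OF aG bG u(1)] ab u(2) by simp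
        have r: "\<exists>v\<in>V. z v = z v" for z using vV by blast
        have f1: "\<exists>v\<in>V. \<one>\<^bsub>H\<^esub> v = a v" "\<exists>v\<in>V. a v = \<one>\<^bsub>H\<^esub> v" using e1a w(1) by (blast, metis)
        have f2: "\<exists>v\<in>V. \<one>\<^bsub>H\<^esub> v = g v" "\<exists>v\<in>V. g v = \<one>\<^bsub>H\<^esub> v" using e1g vV by (blast, metis)
        have f3: "\<exists>v\<in>V. a v = g v" "\<exists>v\<in>V. g v = a v" using eag u(1) by (blast, metis)
        from x have "x = \<one>\<^bsub>H\<^esub> \<or> x = a \<or> x = g" by simp
        moreover from y have "y = \<one>\<^bsub>H\<^esub> \<or> y = a \<or> y = g" by simp
        ultimately show "\<exists>v\<in>V. x v = y v" using r f1 f2 f3 by (elim disjE) simp_all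
      qed
      have "card {\<one>\<^bsub>H\<^esub>, a, g} = 3" using a1 g1 ag by auto
      moreover have "{\<one>\<^bsub>H\<^esub>, a, g} \<subseteq> G" using oneG aG gG by auto
      ultimately have "3 \<in> M" unfolding M_def using int by (intro CollectI exI[of _ "{\<one>\<^bsub>H\<^esub>, a, g}"]) simp
      then have "3 \<le> Max M" using finM by (simp add: Max_ge)
      with max2 show False by simp
    qed
  next
    assume nosol: "\<not> (\<exists>a\<in>I. \<exists>b\<in>I. a \<otimes>\<^bsub>H\<^esub> b = g)"
    have le2: "y \<le> 2" if "y \<in> M" for y
    proof (rule ccontr)
      assume "\<not> y \<le> 2"
      then have y3: "3 \<le> y" by simp
      obtain F where F: "y = card F" "F \<subseteq> G" "intersecting V F" using \<open>y \<in> M\<close> unfolding M_def by auto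
      have finF: "finite F" using F(2) finG finite_subset by blast
      obtain x1 x2 x3 where xs: "x1 \<in> F" "x2 \<in> F" "x3 \<in> F" "x1 \<noteq> x2" "x2 \<noteq> x3" "x1 \<noteq> x3"
        using card_ge3[OF finF] y3 F(1) by blast
      have diffI: "inv\<^bsub>H\<^esub> p \<otimes>\<^bsub>H\<^esub> q \<in> I" if pq: "p \<in> F" "q \<in> F" "p \<noteq> q" for p q
      proof -
        have pG: "p \<in> G" and qG: "q \<in> G" using pq F(2) by auto
        obtain w where w: "w \<in> V" "p w = q w" using F(3) pq unfolding intersecting_def by blast
        have "(inv\<^bsub>H\<^esub> p \<otimes>\<^bsub>H\<^esub> q) w = (inv\<^bsub>H\<^esub> p) (q w)" using ev_mult[OF invG[OF pG] qG w(1)] .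
        also have "\<dots> = w" using ev_inv[OF pG w(1)] w(2) by simp
        finally have fx: "(inv\<^bsub>H\<^esub> p \<otimes>\<^bsub>H\<^esub> q) w = w" .
        have n1: "inv\<^bsub>H\<^esub> p \<otimes>\<^bsub>H\<^esub> q \<noteq> \<one>\<^bsub>H\<^esub>"
        proof
          assume e: "inv\<^bsub>H\<^esub> p \<otimes>\<^bsub>H\<^esub> q = \<one>\<^bsub>H\<^esub>"
          have pH: "p \<in> carrier H" and qH: "q \<in> carrier H" using pG qG carrH by auto
          have "q = p \<otimes>\<^bsub>H\<^esub> (inv\<^bsub>H\<^esub> p \<otimes>\<^bsub>H\<^esub> q)" using H.cancel2[OF pH qH] by simp
          also have "\<dots> = p" using e pH by simp
          finally have "q = p" .
          with pq show False by simp
        qed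
        show ?thesis unfolding I_def using multG[OF invG[OF pG] qG] n1 fx w(1) by auto
      qed
      have "\<exists>a\<in>I. \<exists>b\<in>I. a \<otimes>\<^bsub>H\<^esub> b = g"
        by (rule C.triple_solution[of x1 x2 x3]) (use xs F(2) carrH diffI in auto)
      with nosol show False by simp
    qed
    show "Max M = 2" using finM twoM le2 by (intro Max_eqI) auto
  qed
  also have "\<dots> \<longleftrightarrow> (\<Sum>\<chi>\<in>irr_chars H. \<chi> g ^ 3 / \<chi> \<one>\<^bsub>H\<^esub>) = 0" using sum_iff by simp
  finally show ?thesis .
qed


end
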